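(* Let $E$ be a separable Banach space and let $\{A(t)\}_{t\geq 0}$ be a family of linear operators in $E$. For $\lambda>0$ let $\{R^{(\lambda)}(t,s)\}_{t\geq s\geq 0}$ be a linear evolution system on $E$ corresponding to the problems $\dot u(t)=A(t/\lambda)u(t)$, $t>s$, $u(s)=\bar u\in E$. Suppose that (A1) there are $M\geq 1$ and $\omega\in\mathbb{R}$ such that $\|R^{(\lambda)}(t,s)\|\leq Me^{\omega(t-s)}$ for all $\lambda>0$ and $t\geq s\geq 0$; (A2) there exists a $C_0$ semigroup $\{\widehat S(t)\}_{t\geq 0}$ of bounded linear operators on $E$ with infinitesimal generator $\widehat A$ such that, for any $\bar u\in E$ and $t,s\geq 0$ with $t\geq s$, $\lim_{\lambda\to 0^+,\ \bar v\to\bar u} R^{(\lambda)}(t,s)\bar v=\widehat S(t-s)\bar u$, uniformly with respect to $t,s$ from bounded intervals; (A3) $F:[0,+\infty)\times E\to E$ is continuous, Lipschitz on bounded subsets of $E$ in the second variable uniformly with respect to $t\geq 0$, and has sublinear growth uniformly with respect to $t$, i.e. there is $c>0$ with $\|F(t,\bar v)\|\leq c(1+\|\bar v\|)$ for all $t\geq 0$, $\bar v\in E$; (A4) for each $\bar u\in E$ the set $\{F(t,\bar u)\mid t\geq 0\}$ is relatively compact, and there is a locally Lipschitz mapping $\widehat F:E\to E$ such that for any $\bar u\in E$ and $h>0$, $\widehat F(\bar u)=\lim_{T\to+\infty,\ \bar v\to\bar u}\frac{1}{T}\int_0^T F(\tau+h,\bar v)\,d\tau$, uniformly with respect to $h$.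 Then, for any sequences $(\lambda_n)$ in $(0,+\infty)$ and $(\bar u_n)$ in $E$ with $\lambda_n\to 0^+$ and $\bar u_n\to\bar u_0\in E$, the mild solutions $u_n:[0,+\infty)\to E$ of $\dot u(t)=A(t/\lambda_n)u(t)+F(t/\lambda_n,u(t))$, $t>0$, with $u_n(0)=\bar u_n$, converge uniformly on bounded intervals to the mild solution of the averaged problem $\dot u(t)=\widehat A u(t)+\widehat F(u(t))$, $t>0$, $u(0)=\bar u_0$.
   Context: An evolution system on $E$ is a family $\{R(t,s)\}_{t\geq s\geq 0}$ of bounded linear operators with $R(t,t)=I$, $R(t,s)R(s,r)=R(t,r)$ for $t\geq s\geq r\geq 0$, and $(s,t)\mapsto R(t,s)\bar u$ continuous for each $\bar u\in E$. A mild solution of $\dot u=A(t/\lambda)u+F(t/\lambda,u)$, $u(0)=\bar u$, on $[0,\omega)$ is a continuous $u:[0,\omega)\to E$ with $u(t)=R^{(\lambda)}(t,0)\bar u+\int_0^t R^{(\lambda)}(t,\tau)F(\tau/\lambda,u(\tau))\,d\tau$; for the averaged problem, mild solutions are defined with $\widehat S(t-\tau)$ in place of $R^{(\lambda)}(t,\tau)$ and $\widehat F(u(\tau))$ in place of $F(\tau/\lambda,u(\tau))$. *)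

theory Defs
  imports "HOL-Analysis.Analysis"
begin

definition separable_space :: "'a::metric_space itself \<Rightarrow> bool" where
  "separable_space _ \<longleftrightarrow> (\<exists>D::'a set. countable D \<and> closure D = UNIV)"

definition evolution_system :: "(real \<Rightarrow> real \<Rightarrow> ('e::real_normed_vector \<Rightarrow>\<^sub>L 'e)) \<Rightarrow> bool" where
  "evolution_system R \<longleftrightarrow>
     (\<forall>t\<ge>0. R t t = id_blinfun) \<and>
     (\<forall>t s r. 0 \<le> r \<and> r \<le> s \<and> s \<le> t \<longrightarrow> R t s o\<^sub>L R s r = R t r) \<and>
     (\<forall>u. continuous_on {(s, t). 0 \<le> s \<and> s \<le> t} (\<lambda>(s, t). blinfun_apply (R t s) u))"

definition C0_semigroup :: "(real \<Rightarrow> ('e::real_normed_vector \<Rightarrow>\<^sub>L 'e)) \<Rightarrow> bool" where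
  "C0_semigroup S \<longleftrightarrow>
     S 0 = id_blinfun \<and>
     (\<forall>t s. 0 \<le> t \<and> 0 \<le> s \<longrightarrow> S (t + s) = S t o\<^sub>L S s) \<and>
     (\<forall>u. continuous_on {0..} (\<lambda>t. blinfun_apply (S t) u))"

text \<open>Mild solution on \<open>[0,\<infinity>)\<close> of \<open>u' = A(t/\<lambda>) u + F(t/\<lambda>, u)\<close>, \<open>u(0) = u0\<close>,
  where \<open>R\<close> is the evolution system \<open>R^{(\<lambda>)}\<close>.\<close>
definition mild_solution ::
  "(real \<Rightarrow> real \<Rightarrow> ('e::banach \<Rightarrow>\<^sub>L 'e)) \<Rightarrow> real \<Rightarrow> (real \<Rightarrow> 'e \<Rightarrow> 'e) \<Rightarrow> 'e \<Rightarrow> (real \<Rightarrow> 'e) \<Rightarrow> bool" where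
  "mild_solution R lam F u0 u \<longleftrightarrow>
     continuous_on {0..} u \<and>
     (\<forall>t\<ge>0. ((\<lambda>\<tau>. blinfun_apply (R t \<tau>) (F (\<tau> / lam) (u \<tau>))) has_integral
               (u t - blinfun_apply (R t 0) u0)) {0..t})"

text \<open>Mild solution on \<open>[0,\<infinity>)\<close> of the averaged problem \<open>u' = \<hat>A u + \<hat>F(u)\<close>, \<open>u(0) = u0\<close>,
  where \<open>S\<close> is the semigroup generated by \<open>\<hat>A\<close>.\<close>
definition avg_mild_solution ::
  "(real \<Rightarrow> ('e::banach \<Rightarrow>\<^sub>L 'e)) \<Rightarrow> ('e \<Rightarrow> 'e) \<Rightarrow> 'e \<Rightarrow> (real \<Rightarrow> 'e) \<Rightarrow> bool" where
  "avg_mild_solution S Fh u0 u \<longleftrightarrow>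
     continuous_on {0..} u \<and>
     (\<forall>t\<ge>0. ((\<lambda>\<tau>. blinfun_apply (S (t - \<tau>)) (Fh (u \<tau>))) has_integral
               (u t - blinfun_apply (S t) u0)) {0..t})"

end

theory Submission
  imports Defs
begin

lemma exp_has_integral:
  fixes g :: real assumes "g > 0" "0 \<le> t"
  shows "((\<lambda>x. exp (g * x)) has_integral (exp (g * t) - 1) / g) {0..t}"
proof -
  have "((\<lambda>x. exp (g * x)) has_integral (exp (g * t) / g - exp (g * 0) / g)) {0..t}"
    apply (rule fundamental_theorem_of_calculus[OF assms(2)])
    using assms(1)
    by (auto intro!: derivative_eq_intros simp: has_real_derivative_iff_has_vector_derivative[symmetric])
  then show ?thesis by (simp add: diff_divide_distrib)
qed

lemma gronwall_sup:
  fixes \<phi> :: "real \<Rightarrow> real"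
  assumes cont: "continuous_on {0..T} \<phi>" and nn: "\<And>t. t \<in> {0..T} \<Longrightarrow> 0 \<le> \<phi> t"
    and a: "0 \<le> a" and b: "0 < b"
    and ineq: "\<And>t. t \<in> {0..T} \<Longrightarrow> \<phi> t \<le> a + b * integral {0..t} \<phi>"
    and t: "t \<in> {0..T}"
  shows "\<phi> t \<le> 2 * a * exp (2 * b * T)"
proof -
  define \<gamma> where "\<gamma> = 2 * b"
  have g: "\<gamma> > 0" using b by (simp add: \<gamma>_def)
  define \<psi> where "\<psi> x = exp (- \<gamma> * x) * \<phi> x" for x
  have pc: "continuous_on {0..T} \<psi>" unfolding \<psi>_def
    by (intro continuous_intros cont)
  have ne: "{0..T} \<noteq> {}" using t by auto
  obtain t0 where t0: "t0 \<in> {0..T}" and mx: "\<And>x. x \<in> {0..T} \<Longrightarrow> \<psi> x \<le> \<psi> t0"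
    using continuous_attains_sup[OF compact_Icc ne pc] by blast
  define D where "D = \<psi> t0"
  have D0: "0 \<le> D" using nn[OF t0] by (simp add: D_def \<psi>_def)
  have phiD: "\<phi> x \<le> D * exp (\<gamma> * x)" if "x \<in> {0..T}" for x
  proof -
    have "\<psi> x \<le> D" using mx[OF that] by (simp add: D_def)
    then have "exp (- \<gamma> * x) * \<phi> x * exp (\<gamma> * x) \<le> D * exp (\<gamma> * x)"
      by (simp add: mult_right_mono \<psi>_def)
    moreover have "exp (- \<gamma> * x) * \<phi> x * exp (\<gamma> * x) = \<phi> x"
      by (simp add: mult.commute mult.left_commute flip: exp_add)
    ultimately show ?thesis by linarith
  qed
  have key: "\<psi> x \<le> a + D / 2" if x: "x \<in> {0..T}" for x
  proof -
    have sub: "{0..x} \<subseteq> {0..T}" using x by auto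
    have int1: "\<phi> integrable_on {0..x}"
      using integrable_continuous_real[OF continuous_on_subset[OF cont sub]] by simp
    have ex: "((\<lambda>y. D * exp (\<gamma> * y)) has_integral D * ((exp (\<gamma> * x) - 1) / \<gamma>)) {0..x}"
      using has_integral_mult_right[OF exp_has_integral[OF g, of x]] x by auto
    have "integral {0..x} \<phi> \<le> D * ((exp (\<gamma> * x) - 1) / \<gamma>)"
      using has_integral_le[OF integrable_integral[OF int1] ex] phiD sub by auto
    then have "\<phi> x \<le> a + b * (D * ((exp (\<gamma> * x) - 1) / \<gamma>))"
      using ineq[OF x] b by (smt (verit) mult_left_mono)
    also have "\<dots> = a + D / 2 * (exp (\<gamma> * x) - 1)"
      using b by (simp add: \<gamma>_def field_simps)
    finally have "\<phi> x \<le> a + D / 2 * (exp (\<gamma> * x) - 1)" .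
    then have "\<psi> x \<le> exp (- \<gamma> * x) * (a + D / 2 * (exp (\<gamma> * x) - 1))"
      unfolding \<psi>_def by (simp add: mult_left_mono)
    also have "\<dots> = exp (- \<gamma> * x) * a + D / 2 - D / 2 * exp (- \<gamma> * x)"
      by (simp add: algebra_simps flip: exp_add)
    also have "\<dots> \<le> a + D / 2"
    proof -
      have e1: "exp (- \<gamma> * x) \<le> 1" using g x by simp
      have "exp (- \<gamma> * x) * a \<le> a" using e1 a by (simp add: mult_left_le_one_le)
      moreover have "0 \<le> D / 2 * exp (- \<gamma> * x)" using D0 by simp
      ultimately show ?thesis by linarith
    qed
    finally show ?thesis .
  qed
  have "D \<le> 2 * a" using key[OF t0] by (simp add: D_def)
  then have "\<phi> t \<le> 2 * a * exp (\<gamma> * t)"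
    using phiD[OF t] by (smt (verit) exp_gt_zero mult_right_mono)
  also have "\<dots> \<le> 2 * a * exp (2 * b * T)"
    using t a b by (auto simp: \<gamma>_def intro!: mult_left_mono)
  finally show ?thesis .
qed

lemma cont_apply:
  fixes K :: "'a::metric_space \<Rightarrow> ('e::real_normed_vector \<Rightarrow>\<^sub>L 'e)"
  assumes Kc: "\<And>u. continuous_on D (\<lambda>p. blinfun_apply (K p) u)"
    and KN: "\<And>p. p \<in> D \<Longrightarrow> norm (K p) \<le> N"
    and yc: "continuous_on D y"
  shows "continuous_on D (\<lambda>p. blinfun_apply (K p) (y p))"
  unfolding continuous_on_def
proof
  fix x assume x: "x \<in> D"
  have 1: "((\<lambda>p. blinfun_apply (K p) (y x)) \<longlongrightarrow> blinfun_apply (K x) (y x)) (at x within D)"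
    using Kc[of "y x"] x by (simp add: continuous_on_def)
  have yt: "((\<lambda>p. y p - y x) \<longlongrightarrow> 0) (at x within D)"
    using yc x by (simp add: continuous_on_def LIM_zero)
  have 2: "((\<lambda>p. blinfun_apply (K p) (y p - y x)) \<longlongrightarrow> 0) (at x within D)"
  proof (rule Lim_null_comparison)
    show "\<forall>\<^sub>F p in at x within D. norm (blinfun_apply (K p) (y p - y x)) \<le> N * norm (y p - y x)"
      unfolding eventually_at_filter
      by (auto intro!: always_eventually order_trans[OF norm_blinfun] mult_right_mono KN)
    show "((\<lambda>p. N * norm (y p - y x)) \<longlongrightarrow> 0) (at x within D)"
      using tendsto_mult_right_zero[OF tendsto_norm_zero[OF yt]] by simp
  qed
  have "((\<lambda>p. blinfun_apply (K p) (y p - y x) + blinfun_apply (K p) (y x)) \<longlongrightarrow> 0 + blinfun_apply (K x) (y x)) (at x within D)"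
    by (rule tendsto_add[OF 2 1])
  then show "((\<lambda>p. blinfun_apply (K p) (y p)) \<longlongrightarrow> blinfun_apply (K x) (y x)) (at x within D)"
    by (simp add: blinfun.diff_right)
qed

lemma int_bound_real:
  fixes f :: "real \<Rightarrow> 'a::banach"
  assumes "f integrable_on {a..b}" "a \<le> b" "\<And>t. t \<in> {a..b} \<Longrightarrow> norm (f t) \<le> B"
  shows "norm (integral {a..b} f) \<le> B * (b - a)"
proof -
  have "norm (integral {a..b} f) \<le> integral {a..b} (\<lambda>_. B)"
    by (rule integral_norm_bound_integral) (use assms in auto)
  then show ?thesis using assms(2) by (simp add: mult.commute)
qed

definition tri :: "real \<Rightarrow> (real \<times> real) set" where
  "tri T = {(s,t). 0 \<le> s \<and> s \<le> t \<and> t \<le> T}"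

lemma compact_tri: "compact (tri T)"
proof -
  have "tri T = ({0..T} \<times> {0..T}) \<inter> {p. fst p \<le> snd p}"
    by (auto simp: tri_def)
  moreover have "closed {p::real\<times>real. fst p \<le> snd p}"
    by (intro closed_Collect_le continuous_intros)
  ultimately show ?thesis by (simp add: compact_Int_closed compact_Times)
qed

lemma kernel_H_cont:
  fixes K :: "real \<Rightarrow> real \<Rightarrow> ('e::banach \<Rightarrow>\<^sub>L 'e)"
  assumes Kc: "\<And>u. continuous_on {(s,t). 0\<le>s \<and> s\<le>t} (\<lambda>(s,t). blinfun_apply (K t s) u)"
   and KN: "\<And>s t. 0\<le>s \<Longrightarrow> s\<le>t \<Longrightarrow> t\<le>T \<Longrightarrow> norm (K t s) \<le> N"
   and gc: "continuous_on {0..T} g"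
  shows "continuous_on (tri T) (\<lambda>(s,t). blinfun_apply (K t s) (g s))"
proof -
  have "continuous_on (tri T) (\<lambda>p. blinfun_apply ((\<lambda>(s,t). K t s) p) (g (fst p)))"
  proof (rule cont_apply)
    fix u
    have "continuous_on (tri T) (\<lambda>(s,t). blinfun_apply (K t s) u)"
      by (rule continuous_on_subset[OF Kc]) (auto simp: tri_def)
    then show "continuous_on (tri T) (\<lambda>p. blinfun_apply ((\<lambda>(s,t). K t s) p) u)"
      by (simp add: case_prod_beta)
    show "\<And>p. p \<in> tri T \<Longrightarrow> norm ((\<lambda>(s,t). K t s) p) \<le> N"
      by (auto simp: tri_def KN)
    show "continuous_on (tri T) (\<lambda>p. g (fst p))"
      by (rule continuous_on_compose2[OF gc]) (auto simp: tri_def intro!: continuous_intros)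
  qed
  then show ?thesis by (simp add: case_prod_beta)
qed

lemma kernel_int_integrable:
  fixes K :: "real \<Rightarrow> real \<Rightarrow> ('e::banach \<Rightarrow>\<^sub>L 'e)"
  assumes Kc: "\<And>u. continuous_on {(s,t). 0\<le>s \<and> s\<le>t} (\<lambda>(s,t). blinfun_apply (K t s) u)"
   and KN: "\<And>s t. 0\<le>s \<Longrightarrow> s\<le>t \<Longrightarrow> t\<le>T \<Longrightarrow> norm (K t s) \<le> N"
   and gc: "continuous_on {0..T} g" and t: "0 \<le> t" "t \<le> T" and a: "0 \<le> a"
  shows "continuous_on {a..t} (\<lambda>s. blinfun_apply (K t s) (g s))"
    and "(\<lambda>s. blinfun_apply (K t s) (g s)) integrable_on {a..t}"
proof -
  have H: "continuous_on (tri T) (\<lambda>(s,t). blinfun_apply (K t s) (g s))"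
    by (rule kernel_H_cont[OF Kc KN gc])
  have "continuous_on {a..t} (\<lambda>s. (\<lambda>(s,t). blinfun_apply (K t s) (g s)) (s, t))"
    by (rule continuous_on_compose2[OF H]) (use t a in \<open>auto simp: tri_def intro!: continuous_intros\<close>)
  then show c: "continuous_on {a..t} (\<lambda>s. blinfun_apply (K t s) (g s))" by simp
  then show "(\<lambda>s. blinfun_apply (K t s) (g s)) integrable_on {a..t}"
    by (rule integrable_continuous_real)
qed

lemma kernel_int_cont:
  fixes K :: "real \<Rightarrow> real \<Rightarrow> ('e::banach \<Rightarrow>\<^sub>L 'e)"
  assumes Kc: "\<And>u. continuous_on {(s,t). 0\<le>s \<and> s\<le>t} (\<lambda>(s,t). blinfun_apply (K t s) u)"
   and KN: "\<And>s t. 0\<le>s \<Longrightarrow> s\<le>t \<Longrightarrow> t\<le>T \<Longrightarrow> norm (K t s) \<le> N"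
   and gc: "continuous_on {0..T} g"
  shows "continuous_on {0..T} (\<lambda>t. integral {0..t} (\<lambda>s. blinfun_apply (K t s) (g s)))"
proof -
  define H where "H = (\<lambda>(s,t). blinfun_apply (K t s) (g s))"
  have Hc: "continuous_on (tri T) H" unfolding H_def by (rule kernel_H_cont[OF Kc KN gc])
  have Hu: "uniformly_continuous_on (tri T) H"
    by (rule compact_uniformly_continuous[OF Hc compact_tri])
  obtain B where B: "B > 0" "\<And>p. p \<in> tri T \<Longrightarrow> norm (H p) \<le> B"
    using compact_imp_bounded[OF compact_continuous_image[OF Hc compact_tri]]
    by (metis bounded_pos image_eqI)
  have int: "(\<lambda>s. H (s, t)) integrable_on {a..t}" if "0 \<le> a" "0 \<le> t" "t \<le> T" for a t
    using kernel_int_integrable(2)[OF Kc KN gc that(2,3,1)] by (simp add: H_def)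
  show ?thesis
    unfolding continuous_on_iff
  proof (intro ballI allI impI)
    fix t0 e :: real assume t0: "t0 \<in> {0..T}" and e: "e > 0"
    define \<eta> where "\<eta> = e / (2 * (T + 1))"
    have T0: "T \<ge> 0" using t0 by auto
    have \<eta>: "\<eta> > 0" using e T0 by (simp add: \<eta>_def)
    obtain d1 where d1: "d1 > 0" "\<And>x x'. x \<in> tri T \<Longrightarrow> x' \<in> tri T \<Longrightarrow> dist x' x < d1 \<Longrightarrow> dist (H x') (H x) < \<eta>"
      using Hu \<eta> unfolding uniformly_continuous_on_def by metis
    define d where "d = min d1 (e / (2 * B))"
    have d: "d > 0" using d1 e B by (simp add: d_def)
    have claim: "norm (integral {0..b} (\<lambda>s. H (s, b)) - integral {0..a} (\<lambda>s. H (s, a))) < e"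
      if ab: "0 \<le> a" "a \<le> b" "b \<le> T" "b - a < d" for a b
    proof -
      have split: "integral {0..a} (\<lambda>s. H (s, b)) + integral {a..b} (\<lambda>s. H (s, b)) = integral {0..b} (\<lambda>s. H (s, b))"
        by (rule Henstock_Kurzweil_Integration.integral_combine) (use ab int in auto)
      have i1: "norm (integral {a..b} (\<lambda>s. H (s, b))) \<le> B * (b - a)"
        by (rule int_bound_real) (use int[of a b] B ab in \<open>auto simp: tri_def\<close>)
      have i2: "norm (integral {0..a} (\<lambda>s. H (s, b)) - integral {0..a} (\<lambda>s. H (s, a))) \<le> \<eta> * a"
      proof -
        have "integral {0..a} (\<lambda>s. H (s, b)) - integral {0..a} (\<lambda>s. H (s, a)) = integral {0..a} (\<lambda>s. H (s, b) - H (s, a))"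
          by (rule integral_diff[symmetric]) (use ab integrable_on_subinterval[OF int[of 0 b], of 0 a] int[of 0 a] in \<open>auto\<close>)
        moreover have "norm (integral {0..a} (\<lambda>s. H (s, b) - H (s, a))) \<le> \<eta> * (a - 0)"
        proof (rule int_bound_real)
          show "(\<lambda>s. H (s, b) - H (s, a)) integrable_on {0..a}"
            using integrable_diff[OF integrable_on_subinterval[OF int[of 0 b]] int[of 0 a]] ab by auto
          show "0 \<le> a" by (rule ab)
          fix s assume s: "s \<in> {0..a}"
          have "dist (H (s, b)) (H (s, a)) < \<eta>"
            by (rule d1(2)) (use s ab d in \<open>auto simp: tri_def dist_Pair_Pair d_def dist_real_def\<close>)
          then show "norm (H (s, b) - H (s, a)) \<le> \<eta>" by (simp add: dist_norm)
        qed
        ultimately show ?thesis using ab by simp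
      qed
      have "integral {0..b} (\<lambda>s. H (s, b)) - integral {0..a} (\<lambda>s. H (s, a)) =
            (integral {0..a} (\<lambda>s. H (s, b)) - integral {0..a} (\<lambda>s. H (s, a))) + integral {a..b} (\<lambda>s. H (s, b))"
        using split by (simp add: algebra_simps)
      then have "norm (integral {0..b} (\<lambda>s. H (s, b)) - integral {0..a} (\<lambda>s. H (s, a))) \<le> \<eta> * a + B * (b - a)"
        using i1 i2 norm_triangle_le by (smt (verit))
      also have "\<dots> < e"
      proof -
        have "\<eta> * a \<le> \<eta> * T" using \<eta> ab by (simp add: mult_left_mono)
        also have "\<dots> < e / 2" using e T0 by (simp add: \<eta>_def field_simps)
        finally have 1: "\<eta> * a < e / 2" .
        have "B * (b - a) < B * (e / (2 * B))"
          using ab B d_def by (smt (verit) mult_strict_left_mono)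
        also have "\<dots> = e / 2" using B by simp
        finally show ?thesis using 1 by simp
      qed
      finally show ?thesis .
    qed
    show "\<exists>d>0. \<forall>x'\<in>{0..T}. dist x' t0 < d \<longrightarrow>
      dist (integral {0..x'} (\<lambda>s. blinfun_apply (K x' s) (g s))) (integral {0..t0} (\<lambda>s. blinfun_apply (K t0 s) (g s))) < e"
    proof (intro exI[of _ d] conjI ballI impI)
      show "d > 0" by (rule d)
      fix x' assume x': "x' \<in> {0..T}" "dist x' t0 < d"
      show "dist (integral {0..x'} (\<lambda>s. blinfun_apply (K x' s) (g s))) (integral {0..t0} (\<lambda>s. blinfun_apply (K t0 s) (g s))) < e"
      proof (cases "t0 \<le> x'")
        case True
        then show ?thesis using claim[of t0 x'] x' t0 by (auto simp: dist_norm H_def dist_real_def)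
      next
        case False
        then show ?thesis using claim[of x' t0] x' t0 by (auto simp: dist_norm H_def dist_real_def norm_minus_commute)
      qed
    qed
  qed
qed

lemma clamp_real_in: "0 \<le> (T::real) \<Longrightarrow> clamp 0 T x \<in> {0..T}"
  using clamp_in_interval[of 0 T x] by (simp add: cbox_interval)

lemma clamp_real_id: "x \<in> {0..(T::real)} \<Longrightarrow> clamp 0 T x = x"
  using clamp_cancel_cbox[of x 0 T] by (simp add: cbox_interval)

lemma exist_glob:
  fixes K :: "real \<Rightarrow> real \<Rightarrow> ('e::banach \<Rightarrow>\<^sub>L 'e)" and G :: "real \<Rightarrow> 'e \<Rightarrow> 'e"
  assumes Kc: "\<And>u. continuous_on {(s,t). 0\<le>s \<and> s\<le>t} (\<lambda>(s,t). blinfun_apply (K t s) u)"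
   and KN: "\<And>s t. 0\<le>s \<Longrightarrow> s\<le>t \<Longrightarrow> t\<le>T \<Longrightarrow> norm (K t s) \<le> N"
   and N: "0 \<le> N" and T: "0 \<le> T"
   and Gc: "continuous_on ({0..T} \<times> UNIV) (\<lambda>(t,v). G t v)"
   and GL: "\<And>t x y. t \<in> {0..T} \<Longrightarrow> dist (G t x) (G t y) \<le> L * dist x y" and L: "0 \<le> L"
   and ac: "continuous_on {0..T} a"
  shows "\<exists>w. continuous_on {0..T} w \<and>
     (\<forall>t\<in>{0..T}. w t = a t + integral {0..t} (\<lambda>s. blinfun_apply (K t s) (G s (w s))))"
proof -
  define \<gamma> where "\<gamma> = 2 * N * L + 1"
  have g: "\<gamma> > 0" unfolding \<gamma>_def using mult_nonneg_nonneg[OF N L] by linarith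
  define gz where "gz z s = G s (exp (\<gamma> * s) *\<^sub>R apply_bcontfun z s)" for z :: "real \<Rightarrow>\<^sub>C 'e" and s
  define f where "f z t = exp (- \<gamma> * t) *\<^sub>R (a t + integral {0..t} (\<lambda>s. blinfun_apply (K t s) (gz z s)))" for z t
  have gzc: "continuous_on {0..T} (gz z)" for z
  proof -
    have "continuous_on {0..T} (\<lambda>s. (\<lambda>(t,v). G t v) (s, exp (\<gamma> * s) *\<^sub>R apply_bcontfun z s))"
      by (rule continuous_on_compose2[OF Gc]) (auto intro!: continuous_intros)
    then show ?thesis by (simp add: gz_def)
  qed
  have fc: "continuous_on {0..T} (f z)" for z
    unfolding f_def
    by (intro continuous_intros ac kernel_int_cont[OF Kc KN gzc])
  have ex: "\<exists>h::real \<Rightarrow>\<^sub>C 'e. \<forall>x. apply_bcontfun h x = f z (clamp 0 T x)" for z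
  proof -
    obtain h :: "real \<Rightarrow>\<^sub>C 'e" where "\<And>x. apply_bcontfun h x = f z (clamp 0 T x)"
      using continuous_on_cbox_bcontfunE[of 0 T "f z"] fc[of z] by (auto simp: cbox_interval)
    then show ?thesis by blast
  qed
  define \<Psi> where "\<Psi> z = (SOME h::real \<Rightarrow>\<^sub>C 'e. \<forall>x. apply_bcontfun h x = f z (clamp 0 T x))" for z
  have \<Psi>: "apply_bcontfun (\<Psi> z) x = f z (clamp 0 T x)" for z x
    unfolding \<Psi>_def using someI_ex[OF ex[of z]] by blast
  have contr: "dist (\<Psi> z1) (\<Psi> z2) \<le> (1/2) * dist z1 z2" for z1 z2
  proof (rule dist_bound)
    fix x
    define t where "t = clamp 0 T x"
    have t: "t \<in> {0..T}" using clamp_real_in[OF T] by (simp add: t_def)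
    define D where "D = dist z1 z2"
    have D0: "0 \<le> D" by (simp add: D_def)
    have int: "(\<lambda>s. blinfun_apply (K t s) (gz z s)) integrable_on {0..t}" for z
      using kernel_int_integrable(2)[OF Kc KN gzc, of t 0] t by auto
    have diffeq: "integral {0..t} (\<lambda>s. blinfun_apply (K t s) (gz z1 s)) - integral {0..t} (\<lambda>s. blinfun_apply (K t s) (gz z2 s))
        = integral {0..t} (\<lambda>s. blinfun_apply (K t s) (gz z1 s) - blinfun_apply (K t s) (gz z2 s))"
      by (rule integral_diff[symmetric, OF int int])
    have pt: "norm (blinfun_apply (K t s) (gz z1 s) - blinfun_apply (K t s) (gz z2 s)) \<le> N * L * D * exp (\<gamma> * s)"
      if s: "s \<in> {0..t}" for s
    proof -
      have "norm (blinfun_apply (K t s) (gz z1 s) - blinfun_apply (K t s) (gz z2 s))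
          = norm (blinfun_apply (K t s) (gz z1 s - gz z2 s))" by (simp add: blinfun.diff_right)
      also have "\<dots> \<le> norm (K t s) * norm (gz z1 s - gz z2 s)" by (rule norm_blinfun)
      also have "\<dots> \<le> N * (L * (exp (\<gamma> * s) * D))"
      proof (rule mult_mono)
        show "norm (K t s) \<le> N" using s t by (auto intro!: KN)
        have "norm (gz z1 s - gz z2 s) \<le> L * dist (exp (\<gamma> * s) *\<^sub>R apply_bcontfun z1 s) (exp (\<gamma> * s) *\<^sub>R apply_bcontfun z2 s)"
          using GL[of s] s t by (auto simp: gz_def dist_norm)
        also have "dist (exp (\<gamma> * s) *\<^sub>R apply_bcontfun z1 s) (exp (\<gamma> * s) *\<^sub>R apply_bcontfun z2 s)
            = exp (\<gamma> * s) * dist (apply_bcontfun z1 s) (apply_bcontfun z2 s)"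
          by (simp add: dist_norm flip: scaleR_diff_right)
        also have "\<dots> \<le> exp (\<gamma> * s) * D"
          using dist_bounded[of z1 s z2] by (simp add: D_def)
        finally show "norm (gz z1 s - gz z2 s) \<le> L * (exp (\<gamma> * s) * D)"
          using L by (smt (verit) mult_left_mono)
      qed (use N in auto)
      finally show ?thesis by (simp add: ac_simps)
    qed
    have eh: "((\<lambda>s. N * L * D * exp (\<gamma> * s)) has_integral N * L * D * ((exp (\<gamma> * t) - 1) / \<gamma>)) {0..t}"
      using has_integral_mult_right[OF exp_has_integral[OF g, of t]] t by auto
    have "norm (integral {0..t} (\<lambda>s. blinfun_apply (K t s) (gz z1 s) - blinfun_apply (K t s) (gz z2 s)))
        \<le> integral {0..t} (\<lambda>s. N * L * D * exp (\<gamma> * s))"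
      by (rule integral_norm_bound_integral) (use int pt eh in \<open>auto intro: integrable_diff\<close>)
    also have "\<dots> = N * L * D * ((exp (\<gamma> * t) - 1) / \<gamma>)" using eh by (rule integral_unique)
    finally have I: "norm (integral {0..t} (\<lambda>s. blinfun_apply (K t s) (gz z1 s)) - integral {0..t} (\<lambda>s. blinfun_apply (K t s) (gz z2 s)))
       \<le> N * L * D * ((exp (\<gamma> * t) - 1) / \<gamma>)" using diffeq by simp
    have "dist (apply_bcontfun (\<Psi> z1) x) (apply_bcontfun (\<Psi> z2) x) = dist (f z1 t) (f z2 t)"
      by (simp add: \<Psi> t_def)
    also have "\<dots> = exp (- \<gamma> * t) * norm (integral {0..t} (\<lambda>s. blinfun_apply (K t s) (gz z1 s)) - integral {0..t} (\<lambda>s. blinfun_apply (K t s) (gz z2 s)))"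
      unfolding f_def dist_norm by (simp flip: scaleR_diff_right)
    also have "\<dots> \<le> exp (- \<gamma> * t) * (N * L * D * ((exp (\<gamma> * t) - 1) / \<gamma>))"
      by (rule mult_left_mono[OF I]) simp
    also have "\<dots> = N * L * D * ((1 - exp (- \<gamma> * t)) / \<gamma>)"
      by (simp add: field_simps flip: exp_add)
    also have "\<dots> \<le> N * L * D * (1 / \<gamma>)"
      using N L D0 g by (intro mult_left_mono divide_right_mono) auto
    also have "\<dots> \<le> (1/2) * D"
    proof -
      have "N * L * (1 / \<gamma>) \<le> 1/2" using N L g by (simp add: \<gamma>_def field_simps)
      then show ?thesis using D0 by (smt (verit) mult.commute mult.left_commute mult_right_mono)
    qed
    finally show "dist (apply_bcontfun (\<Psi> z1) x) (apply_bcontfun (\<Psi> z2) x) \<le> 1 / 2 * dist z1 z2"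
      by (simp add: D_def)
  qed
  obtain z where z: "\<Psi> z = z"
    using banach_fix_type[of "1/2" \<Psi>] contr by auto
  define w where "w s = exp (\<gamma> * s) *\<^sub>R apply_bcontfun z s" for s
  show ?thesis
  proof (intro exI[of _ w] conjI ballI)
    show "continuous_on {0..T} w" unfolding w_def by (intro continuous_intros continuous_on_apply_bcontfun)
    fix t assume t: "t \<in> {0..T}"
    have "apply_bcontfun z t = f z t" using \<Psi>[of z t] z clamp_real_id[OF t] by simp
    then have "w t = exp (\<gamma> * t) *\<^sub>R f z t" by (simp add: w_def)
    also have "\<dots> = a t + integral {0..t} (\<lambda>s. blinfun_apply (K t s) (gz z s))"
      by (simp add: f_def flip: exp_add)
    finally show "w t = a t + integral {0..t} (\<lambda>s. blinfun_apply (K t s) (G s (w s)))"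
      by (simp add: gz_def w_def)
  qed
qed

definition retr :: "real \<Rightarrow> 'a::real_normed_vector \<Rightarrow> 'a" where
  "retr \<rho> v = (if norm v \<le> \<rho> then v else (\<rho> / norm v) *\<^sub>R v)"

lemma retr_norm: "0 \<le> \<rho> \<Longrightarrow> norm (retr \<rho> v) \<le> norm v"
  by (auto simp: retr_def divide_le_eq_1)

lemma retr_id: "norm v \<le> \<rho> \<Longrightarrow> retr \<rho> v = v"
  by (simp add: retr_def)

lemma retr_lip_aux:
  fixes x y :: "'a::real_normed_vector"
  assumes r: "0 < \<rho>" and xy: "norm y \<le> norm x"
  shows "norm (retr \<rho> x - retr \<rho> y) \<le> 2 * norm (x - y)"
proof -
  have tri: "norm x - norm y \<le> norm (x - y)" by (rule norm_triangle_ineq2)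
  consider "norm x \<le> \<rho>" | "norm y \<le> \<rho>" "\<rho> < norm x" | "\<rho> < norm y" using xy by linarith
  then show ?thesis
  proof cases
    case 1 then show ?thesis using xy by (simp add: retr_def)
  next
    case 2
    then have x0: "norm x > 0" using r by linarith
    have e: "retr \<rho> x - retr \<rho> y = ((\<rho> / norm x - 1) *\<^sub>R x) + (x - y)"
      using 2 by (simp add: retr_def algebra_simps)
    have "norm ((\<rho> / norm x - 1) *\<^sub>R x) = \<bar>\<rho> / norm x - 1\<bar> * norm x" by simp
    also have "\<dots> = (1 - \<rho> / norm x) * norm x"
      using 2 x0 by (simp add: divide_le_eq_1)
    also have "\<dots> = norm x - \<rho>" using x0 by (simp add: field_simps)
    finally have n1: "norm ((\<rho> / norm x - 1) *\<^sub>R x) = norm x - \<rho>" .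
    have "norm (retr \<rho> x - retr \<rho> y) \<le> norm ((\<rho> / norm x - 1) *\<^sub>R x) + norm (x - y)"
      unfolding e by (rule norm_triangle_ineq)
    then show ?thesis using n1 2 tri by linarith
  next
    case 3
    then have y0: "norm y > 0" using r by linarith
    have x0: "norm x > 0" using y0 xy by linarith
    define q where "q = norm x / norm y"
    have e: "retr \<rho> x - retr \<rho> y = (\<rho> / norm x) *\<^sub>R (x - q *\<^sub>R y)"
      using 3 xy x0 y0 by (simp add: retr_def q_def algebra_simps)
    have e2: "x - q *\<^sub>R y = (x - y) + (1 - q) *\<^sub>R y" by (simp add: algebra_simps)
    have q1: "q \<ge> 1" using xy y0 by (simp add: q_def)
    have "norm ((1 - q) *\<^sub>R y) = (q - 1) * norm y" using q1 by simp
    also have "\<dots> = norm x - norm y" using y0 by (simp add: q_def field_simps)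
    finally have n2: "norm ((1 - q) *\<^sub>R y) = norm x - norm y" .
    have "norm (x - q *\<^sub>R y) \<le> norm (x - y) + norm ((1 - q) *\<^sub>R y)"
      unfolding e2 by (rule norm_triangle_ineq)
    then have n3: "norm (x - q *\<^sub>R y) \<le> 2 * norm (x - y)" using n2 tri by linarith
    have "norm (retr \<rho> x - retr \<rho> y) = (\<rho> / norm x) * norm (x - q *\<^sub>R y)"
      unfolding e using r by simp
    also have "\<dots> \<le> norm (x - q *\<^sub>R y)"
      using 3 xy r by (intro mult_left_le_one_le) (auto simp: divide_le_eq_1)
    finally show ?thesis using n3 by linarith
  qed
qed

lemma retr_lip:
  fixes x y :: "'a::real_normed_vector"
  assumes r: "0 < \<rho>"
  shows "dist (retr \<rho> x) (retr \<rho> y) \<le> 2 * dist x y"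
proof (cases "norm y \<le> norm x")
  case True then show ?thesis using retr_lip_aux[OF r True] by (simp add: dist_norm)
next
  case False then show ?thesis using retr_lip_aux[OF r, of x y] by (simp add: dist_norm norm_minus_commute)
qed

lemma retr_cont: "0 < \<rho> \<Longrightarrow> continuous_on S (retr \<rho>)"
  by (rule lipschitz_on_continuous_on[of 2]) (auto simp: lipschitz_on_def retr_lip)

lemma retr_le: "0 \<le> \<rho> \<Longrightarrow> norm (retr \<rho> v) \<le> \<rho>"
  by (auto simp: retr_def)

lemma exist_T:
  fixes K :: "real \<Rightarrow> real \<Rightarrow> ('e::banach \<Rightarrow>\<^sub>L 'e)" and G :: "real \<Rightarrow> 'e \<Rightarrow> 'e"
  assumes Kc: "\<And>u. continuous_on {(s,t). 0\<le>s \<and> s\<le>t} (\<lambda>(s,t). blinfun_apply (K t s) u)"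
   and KN: "\<And>s t. 0\<le>s \<Longrightarrow> s\<le>t \<Longrightarrow> t\<le>T \<Longrightarrow> norm (K t s) \<le> N"
   and N: "0 \<le> N" and T: "0 \<le> T"
   and Gc: "continuous_on ({0..T} \<times> UNIV) (\<lambda>(t,v). G t v)"
   and Gl: "\<And>B. bounded B \<Longrightarrow> \<exists>L. \<forall>t\<in>{0..T}. \<forall>x\<in>B. \<forall>y\<in>B. dist (G t x) (G t y) \<le> L * dist x y"
   and Gg: "\<And>t v. t \<in> {0..T} \<Longrightarrow> norm (G t v) \<le> c * (1 + norm v)" and c: "0 \<le> c"
   and ac: "continuous_on {0..T} a" and ab: "\<And>t. t \<in> {0..T} \<Longrightarrow> norm (a t) \<le> A"
  shows "\<exists>w. continuous_on {0..T} w \<and>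
     (\<forall>t\<in>{0..T}. w t = a t + integral {0..t} (\<lambda>s. blinfun_apply (K t s) (G s (w s))))"
proof -
  have A0: "0 \<le> A" using ab[of 0] T by (smt (verit) atLeastAtMost_iff norm_ge_zero)
  define \<rho> where "\<rho> = 2 * (A + N * c * T) * exp (2 * (N * c + 1) * T) + 1"
  have \<rho>0: "0 < \<rho>" unfolding \<rho>_def using A0 N c T
    by (smt (verit) exp_gt_zero mult_nonneg_nonneg)
  obtain L0 where L0: "\<forall>t\<in>{0..T}. \<forall>x\<in>cball 0 \<rho>. \<forall>y\<in>cball 0 \<rho>. dist (G t x) (G t y) \<le> L0 * dist x y"
    using Gl[of "cball 0 \<rho>"] by auto
  define L where "L = max L0 0"
  define G' where "G' t v = G t (retr \<rho> v)" for t v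
  have G'c: "continuous_on ({0..T} \<times> UNIV) (\<lambda>(t,v). G' t v)"
  proof -
    have "continuous_on ({0..T} \<times> UNIV) (\<lambda>p. (\<lambda>(t,v). G t v) (fst p, retr \<rho> (snd p)))"
      by (rule continuous_on_compose2[OF Gc]) (auto intro!: continuous_intros continuous_on_compose2[OF retr_cont[OF \<rho>0]])
    then show ?thesis by (simp add: G'_def case_prod_beta)
  qed
  have G'L: "dist (G' t x) (G' t y) \<le> (2 * L) * dist x y" if "t \<in> {0..T}" for t x y
  proof -
    have "retr \<rho> x \<in> cball 0 \<rho>" "retr \<rho> y \<in> cball 0 \<rho>"
      using retr_le[of \<rho>] \<rho>0 by (auto simp: mem_cball_0)
    then have "dist (G' t x) (G' t y) \<le> L0 * dist (retr \<rho> x) (retr \<rho> y)"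
      using L0 that unfolding G'_def by blast
    also have "\<dots> \<le> L * dist (retr \<rho> x) (retr \<rho> y)" by (simp add: L_def mult_right_mono)
    also have "\<dots> \<le> L * (2 * dist x y)" by (rule mult_left_mono[OF retr_lip[OF \<rho>0]]) (simp add: L_def)
    finally show ?thesis by simp
  qed
  obtain w where wc: "continuous_on {0..T} w"
    and weq: "\<And>t. t\<in>{0..T} \<Longrightarrow> w t = a t + integral {0..t} (\<lambda>s. blinfun_apply (K t s) (G' s (w s)))"
    using exist_glob[OF Kc KN N T G'c G'L _ ac] by (auto simp: L_def)
  have g'c: "continuous_on {0..T} (\<lambda>s. G' s (w s))"
  proof -
    have "continuous_on {0..T} (\<lambda>s. (\<lambda>(t,v). G' t v) (s, w s))"
      by (rule continuous_on_compose2[OF G'c]) (auto intro!: continuous_intros wc)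
    then show ?thesis by simp
  qed
  have wb: "norm (w t) \<le> \<rho>" if t: "t \<in> {0..T}" for t
  proof -
    define \<phi> where "\<phi> s = norm (w s)" for s
    have \<phi>c: "continuous_on {0..T} \<phi>" unfolding \<phi>_def by (intro continuous_intros wc)
    have ineq: "\<phi> x \<le> (A + N * c * T) + (N * c + 1) * integral {0..x} \<phi>" if x: "x \<in> {0..T}" for x
    proof -
      have sub: "{0..x} \<subseteq> {0..T}" using x by auto
      have i1: "(\<lambda>s. blinfun_apply (K x s) (G' s (w s))) integrable_on {0..x}"
        using kernel_int_integrable(2)[OF Kc KN g'c, of x 0] x by auto
      have \<phi>i: "\<phi> integrable_on {0..x}"
        by (rule integrable_continuous_real[OF continuous_on_subset[OF \<phi>c sub]])
      have i2: "(\<lambda>s. N * c * (1 + \<phi> s)) integrable_on {0..x}"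
        by (intro integrable_continuous_real continuous_intros continuous_on_subset[OF \<phi>c sub])
      have "norm (integral {0..x} (\<lambda>s. blinfun_apply (K x s) (G' s (w s)))) \<le> integral {0..x} (\<lambda>s. N * c * (1 + \<phi> s))"
      proof (rule integral_norm_bound_integral[OF i1 i2])
        fix s assume s: "s \<in> {0..x}"
        have "norm (blinfun_apply (K x s) (G' s (w s))) \<le> norm (K x s) * norm (G' s (w s))" by (rule norm_blinfun)
        also have "\<dots> \<le> N * (c * (1 + \<phi> s))"
        proof (rule mult_mono)
          show "norm (K x s) \<le> N" using s x by (auto intro!: KN)
          have "norm (G' s (w s)) \<le> c * (1 + norm (retr \<rho> (w s)))" using Gg s x by (simp add: G'_def)
          also have "\<dots> \<le> c * (1 + \<phi> s)" using retr_norm[of \<rho> "w s"] \<rho>0 c by (simp add: \<phi>_def mult_left_mono)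
          finally show "norm (G' s (w s)) \<le> c * (1 + \<phi> s)" .
        qed (use N in auto)
        finally show "norm (blinfun_apply (K x s) (G' s (w s))) \<le> N * c * (1 + \<phi> s)" by (simp add: ac_simps)
      qed
      also have "integral {0..x} (\<lambda>s. N * c * (1 + \<phi> s)) = N * c * x + N * c * integral {0..x} \<phi>"
      proof -
        have "integral {0..x} (\<lambda>s. N * c * (1 + \<phi> s)) = N * c * integral {0..x} (\<lambda>s. 1 + \<phi> s)"
          by simp
        also have "integral {0..x} (\<lambda>s. 1 + \<phi> s) = x + integral {0..x} \<phi>"
          using integral_add[OF integrable_const_ivl \<phi>i, of 1] x by simp
        finally show ?thesis by (simp add: algebra_simps)
      qed
      finally have I: "norm (integral {0..x} (\<lambda>s. blinfun_apply (K x s) (G' s (w s)))) \<le> N * c * x + N * c * integral {0..x} \<phi>" .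
      have "\<phi> x \<le> norm (a x) + norm (integral {0..x} (\<lambda>s. blinfun_apply (K x s) (G' s (w s))))"
        using weq[OF x] norm_triangle_ineq by (simp add: \<phi>_def)
      also have "\<dots> \<le> A + (N * c * x + N * c * integral {0..x} \<phi>)" using ab[OF x] I by linarith
      also have "\<dots> \<le> (A + N * c * T) + (N * c + 1) * integral {0..x} \<phi>"
      proof -
        have i0: "0 \<le> integral {0..x} \<phi>" by (rule integral_nonneg[OF \<phi>i]) (simp add: \<phi>_def)
        have "N * c * x \<le> N * c * T" using x N c by (simp add: mult_left_mono)
        then show ?thesis using i0 by (simp add: algebra_simps)
      qed
      finally show ?thesis .
    qed
    have Nc1: "0 < N * c + 1" using mult_nonneg_nonneg[OF N c] by linarith
    have ANT: "0 \<le> A + N * c * T" using A0 mult_nonneg_nonneg[OF mult_nonneg_nonneg[OF N c] T] by linarith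
    have "\<phi> t \<le> 2 * (A + N * c * T) * exp (2 * (N * c + 1) * T)"
      by (rule gronwall_sup[OF \<phi>c _ ANT Nc1 ineq t]) (auto simp: \<phi>_def)
    then show ?thesis by (simp add: \<phi>_def \<rho>_def)
  qed
  show ?thesis
  proof (intro exI[of _ w] conjI wc ballI)
    fix t assume t: "t \<in> {0..T}"
    have "integral {0..t} (\<lambda>s. blinfun_apply (K t s) (G' s (w s))) = integral {0..t} (\<lambda>s. blinfun_apply (K t s) (G s (w s)))"
      by (rule integral_cong) (use t wb in \<open>auto simp: G'_def retr_id\<close>)
    then show "w t = a t + integral {0..t} (\<lambda>s. blinfun_apply (K t s) (G s (w s)))" using weq[OF t] by simp
  qed
qed

lemma uniq_T:
  fixes K :: "real \<Rightarrow> real \<Rightarrow> ('e::banach \<Rightarrow>\<^sub>L 'e)" and G :: "real \<Rightarrow> 'e \<Rightarrow> 'e"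
  assumes Kc: "\<And>u. continuous_on {(s,t). 0\<le>s \<and> s\<le>t} (\<lambda>(s,t). blinfun_apply (K t s) u)"
   and KN: "\<And>s t. 0\<le>s \<Longrightarrow> s\<le>t \<Longrightarrow> t\<le>T \<Longrightarrow> norm (K t s) \<le> N"
   and N: "0 \<le> N"
   and Gc: "continuous_on ({0..T} \<times> UNIV) (\<lambda>(t,v). G t v)"
   and Gl: "\<And>B. bounded B \<Longrightarrow> \<exists>L. \<forall>t\<in>{0..T}. \<forall>x\<in>B. \<forall>y\<in>B. dist (G t x) (G t y) \<le> L * dist x y"
   and w1c: "continuous_on {0..T} w1" and w1: "\<And>t. t\<in>{0..T} \<Longrightarrow> w1 t = a t + integral {0..t} (\<lambda>s. blinfun_apply (K t s) (G s (w1 s)))"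
   and w2c: "continuous_on {0..T} w2" and w2: "\<And>t. t\<in>{0..T} \<Longrightarrow> w2 t = a t + integral {0..t} (\<lambda>s. blinfun_apply (K t s) (G s (w2 s)))"
   and t: "t \<in> {0..T}"
  shows "w1 t = w2 t"
proof -
  have bB: "bounded (w1 ` {0..T} \<union> w2 ` {0..T})"
    using compact_imp_bounded[OF compact_continuous_image[OF w1c compact_Icc]]
      compact_imp_bounded[OF compact_continuous_image[OF w2c compact_Icc]] by simp
  obtain L0 where L0: "\<forall>t\<in>{0..T}. \<forall>x\<in>w1 ` {0..T} \<union> w2 ` {0..T}. \<forall>y\<in>w1 ` {0..T} \<union> w2 ` {0..T}. dist (G t x) (G t y) \<le> L0 * dist x y"
    using Gl[OF bB] by blast
  define L where "L = max L0 0"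
  have gc: "continuous_on {0..T} (\<lambda>s. G s (w s))" if "continuous_on {0..T} w" for w
  proof -
    have "continuous_on {0..T} (\<lambda>s. (\<lambda>(t,v). G t v) (s, w s))"
      by (rule continuous_on_compose2[OF Gc]) (auto intro!: continuous_intros that)
    then show ?thesis by simp
  qed
  define \<phi> where "\<phi> s = norm (w1 s - w2 s)" for s
  have \<phi>c: "continuous_on {0..T} \<phi>" unfolding \<phi>_def by (intro continuous_intros w1c w2c)
  have ineq: "\<phi> x \<le> 0 + (N * L + 1) * integral {0..x} \<phi>" if x: "x \<in> {0..T}" for x
  proof -
    have sub: "{0..x} \<subseteq> {0..T}" using x by auto
    have i1: "(\<lambda>s. blinfun_apply (K x s) (G s (w1 s))) integrable_on {0..x}"
      using kernel_int_integrable(2)[OF Kc KN gc[OF w1c], of x 0] x by auto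
    have i2: "(\<lambda>s. blinfun_apply (K x s) (G s (w2 s))) integrable_on {0..x}"
      using kernel_int_integrable(2)[OF Kc KN gc[OF w2c], of x 0] x by auto
    have \<phi>i: "\<phi> integrable_on {0..x}"
      by (rule integrable_continuous_real[OF continuous_on_subset[OF \<phi>c sub]])
    have "w1 x - w2 x = integral {0..x} (\<lambda>s. blinfun_apply (K x s) (G s (w1 s)) - blinfun_apply (K x s) (G s (w2 s)))"
      using w1[OF x] w2[OF x] integral_diff[OF i1 i2] by simp
    then have "\<phi> x = norm (integral {0..x} (\<lambda>s. blinfun_apply (K x s) (G s (w1 s)) - blinfun_apply (K x s) (G s (w2 s))))"
      by (simp add: \<phi>_def)
    also have "\<dots> \<le> integral {0..x} (\<lambda>s. (N * L) * \<phi> s)"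
    proof (rule integral_norm_bound_integral)
      show "(\<lambda>s. blinfun_apply (K x s) (G s (w1 s)) - blinfun_apply (K x s) (G s (w2 s))) integrable_on {0..x}"
        by (rule integrable_diff[OF i1 i2])
      show "(\<lambda>s. N * L * \<phi> s) integrable_on {0..x}" using integrable_on_cmult_left[OF \<phi>i, of "N * L"] by simp
      fix s assume s: "s \<in> {0..x}"
      have "norm (blinfun_apply (K x s) (G s (w1 s)) - blinfun_apply (K x s) (G s (w2 s)))
          = norm (blinfun_apply (K x s) (G s (w1 s) - G s (w2 s)))" by (simp add: blinfun.diff_right)
      also have "\<dots> \<le> norm (K x s) * norm (G s (w1 s) - G s (w2 s))" by (rule norm_blinfun)
      also have "\<dots> \<le> N * (L * \<phi> s)"
      proof (rule mult_mono)
        show "norm (K x s) \<le> N" using s x by (auto intro!: KN)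
        have "norm (G s (w1 s) - G s (w2 s)) \<le> L0 * \<phi> s"
          using L0 s x by (auto simp: \<phi>_def dist_norm)
        then show "norm (G s (w1 s) - G s (w2 s)) \<le> L * \<phi> s"
          by (smt (verit) L_def \<phi>_def max.cobounded1 mult_right_mono norm_ge_zero)
      qed (use N in auto)
      finally show "norm (blinfun_apply (K x s) (G s (w1 s)) - blinfun_apply (K x s) (G s (w2 s))) \<le> N * L * \<phi> s"
        by (simp add: ac_simps)
    qed
    also have "\<dots> = (N * L) * integral {0..x} \<phi>" by simp
    also have "\<dots> \<le> (N * L + 1) * integral {0..x} \<phi>"
    proof -
      have "0 \<le> integral {0..x} \<phi>" by (rule integral_nonneg[OF \<phi>i]) (simp add: \<phi>_def)
      then show ?thesis by (simp add: distrib_right)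
    qed
    finally show ?thesis by simp
  qed
  have NL: "0 < N * L + 1" using mult_nonneg_nonneg[OF N, of L] by (simp add: L_def)
  have "\<phi> t \<le> 2 * 0 * exp (2 * (N * L + 1) * T)"
    by (rule gronwall_sup[OF \<phi>c _ _ NL ineq t]) (auto simp: \<phi>_def)
  then show ?thesis by (simp add: \<phi>_def)
qed

lemma exist_global:
  fixes K :: "real \<Rightarrow> real \<Rightarrow> ('e::banach \<Rightarrow>\<^sub>L 'e)" and G :: "real \<Rightarrow> 'e \<Rightarrow> 'e"
  assumes Kc: "\<And>u. continuous_on {(s,t). 0\<le>s \<and> s\<le>t} (\<lambda>(s,t). blinfun_apply (K t s) u)"
   and KN: "\<And>T. \<exists>N. 0 \<le> N \<and> (\<forall>s t. 0\<le>s \<longrightarrow> s\<le>t \<longrightarrow> t\<le>T \<longrightarrow> norm (K t s) \<le> N)"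
   and Gc: "continuous_on ({0..} \<times> UNIV) (\<lambda>(t,v). G t v)"
   and Gl: "\<And>B. bounded B \<Longrightarrow> \<exists>L. \<forall>t\<ge>0. \<forall>x\<in>B. \<forall>y\<in>B. dist (G t x) (G t y) \<le> L * dist x y"
   and Gg: "\<And>t v. 0 \<le> t \<Longrightarrow> norm (G t v) \<le> c * (1 + norm v)" and c: "0 \<le> c"
  shows "\<exists>w. continuous_on {0..} w \<and>
     (\<forall>t\<ge>0. ((\<lambda>s. blinfun_apply (K t s) (G s (w s))) has_integral (w t - blinfun_apply (K t 0) u0)) {0..t})"
proof -
  define a where "a t = blinfun_apply (K t 0) u0" for t
  have GcT: "continuous_on ({0..T} \<times> UNIV) (\<lambda>(t,v). G t v)" for T
    by (rule continuous_on_subset[OF Gc]) auto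
  have GlT: "\<exists>L. \<forall>t\<in>{0..T}. \<forall>x\<in>B. \<forall>y\<in>B. dist (G t x) (G t y) \<le> L * dist x y" if "bounded B" for B T
    using Gl[OF that] by (metis atLeastAtMost_iff)
  have ac: "continuous_on {0..T} a" for T
  proof -
    have "continuous_on {0..T} (\<lambda>t. (\<lambda>(s,t). blinfun_apply (K t s) u0) (0, t))"
      by (rule continuous_on_compose2[OF Kc[of u0]]) (auto intro!: continuous_intros)
    then show ?thesis by (simp add: a_def)
  qed
  have sol: "\<exists>w. continuous_on {0..real k} w \<and>
     (\<forall>t\<in>{0..real k}. w t = a t + integral {0..t} (\<lambda>s. blinfun_apply (K t s) (G s (w s))))" for k :: nat
  proof -
    obtain N where N: "0 \<le> N" "\<And>s t. 0\<le>s \<Longrightarrow> s\<le>t \<Longrightarrow> t\<le>real k \<Longrightarrow> norm (K t s) \<le> N"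
      using KN[of "real k"] by blast
    have ab: "norm (a t) \<le> N * norm u0" if "t \<in> {0..real k}" for t
      using that N(2)[of 0 t] norm_blinfun[of "K t 0" u0] N(1)
      by (auto simp: a_def) (meson mult_right_mono norm_ge_zero order_trans)
    show ?thesis
      by (rule exist_T[OF Kc N(2) N(1) _ GcT GlT Gg c ac ab]) auto
  qed
  then obtain W where Wc: "\<And>k. continuous_on {0..real k} (W k)"
    and Weq: "\<And>k t. t \<in> {0..real k} \<Longrightarrow> W k t = a t + integral {0..t} (\<lambda>s. blinfun_apply (K t s) (G s (W k s)))"
    by metis
  have agree: "W k t = W m t" if "k \<le> m" "t \<in> {0..real k}" for k m t
  proof -
    obtain N where N: "0 \<le> N" "\<And>s t. 0\<le>s \<Longrightarrow> s\<le>t \<Longrightarrow> t\<le>real k \<Longrightarrow> norm (K t s) \<le> N"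
      using KN[of "real k"] by blast
    have sub: "{0..real k} \<subseteq> {0..real m}" using that by auto
    show ?thesis
      by (rule uniq_T[OF Kc N(2) N(1) GcT GlT Wc Weq continuous_on_subset[OF Wc sub] Weq that(2)])
        (use sub in auto)
  qed
  define w where "w t = W (nat \<lceil>t\<rceil>) t" for t
  have wW: "w t = W k t" if "t \<in> {0..real k}" for t k
  proof -
    have "nat \<lceil>t\<rceil> \<le> k" using that by (auto simp: nat_le_iff ceiling_le_iff)
    moreover have "t \<in> {0..real (nat \<lceil>t\<rceil>)}" using that by (auto simp: of_nat_nat le_of_int_ceiling)
    ultimately show ?thesis unfolding w_def by (rule agree)
  qed
  have wc: "continuous_on {0..} w"
    unfolding continuous_on_eq_continuous_within
  proof
    fix x :: real assume x: "x \<in> {0..}"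
    define k where "k = nat \<lceil>x\<rceil> + 1"
    have xk: "x < real k" using x by (simp add: k_def) linarith
    have "continuous_on {0..real k} w"
      by (rule continuous_on_eq[OF Wc[of k]]) (use wW in auto)
    then have c1: "continuous (at x within {0..real k}) w"
      using x xk by (auto simp: continuous_on_eq_continuous_within)
    have "at x within {0..} = at x within {0..real k}"
      by (rule at_within_nhd[of x "{..<real k}"]) (use xk x in auto)
    then show "continuous (at x within {0..}) w" using c1 by simp
  qed
  show ?thesis
  proof (intro exI[of _ w] conjI wc allI impI)
    fix t :: real assume t: "0 \<le> t"
    define k where "k = nat \<lceil>t\<rceil>"
    have tk: "t \<in> {0..real k}" using t by (auto simp: k_def le_of_int_ceiling)
    obtain N where N: "0 \<le> N" "\<And>s t. 0\<le>s \<Longrightarrow> s\<le>t \<Longrightarrow> t\<le>real k \<Longrightarrow> norm (K t s) \<le> N"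
      using KN[of "real k"] by blast
    have gc: "continuous_on {0..real k} (\<lambda>s. G s (W k s))"
    proof -
      have "continuous_on {0..real k} (\<lambda>s. (\<lambda>(t,v). G t v) (s, W k s))"
        by (rule continuous_on_compose2[OF GcT]) (auto intro!: continuous_intros Wc)
      then show ?thesis by simp
    qed
    have int: "(\<lambda>s. blinfun_apply (K t s) (G s (W k s))) integrable_on {0..t}"
      using kernel_int_integrable(2)[OF Kc N(2) gc, of t 0] tk by auto
    have "((\<lambda>s. blinfun_apply (K t s) (G s (W k s))) has_integral (W k t - a t)) {0..t}"
      using integrable_integral[OF int] Weq[OF tk] by simp
    moreover have "W k t = w t" using wW[OF tk] by simp
    moreover have "((\<lambda>s. blinfun_apply (K t s) (G s (W k s))) has_integral i) {0..t} \<longleftrightarrow>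
                   ((\<lambda>s. blinfun_apply (K t s) (G s (w s))) has_integral i) {0..t}" for i
      by (rule has_integral_cong) (use tk wW[of _ k] in auto)
    ultimately show "((\<lambda>s. blinfun_apply (K t s) (G s (w s))) has_integral (w t - blinfun_apply (K t 0) u0)) {0..t}"
      by (simp add: a_def)
  qed
qed

locale avg_setting =
  fixes R :: "real \<Rightarrow> real \<Rightarrow> real \<Rightarrow> ('e::banach \<Rightarrow>\<^sub>L 'e)"
    and S :: "real \<Rightarrow> ('e \<Rightarrow>\<^sub>L 'e)"
    and F :: "real \<Rightarrow> 'e \<Rightarrow> 'e"
    and Fh :: "'e \<Rightarrow> 'e"
    and M \<omega> :: real
  assumes evol: "\<And>l. l > 0 \<Longrightarrow> evolution_system (R l)"
    and A1: "M \<ge> 1" "\<And>l t s. l > 0 \<Longrightarrow> 0 \<le> s \<Longrightarrow> s \<le> t \<Longrightarrow>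
               norm (R l t s) \<le> M * exp (\<omega> * (t - s))"
    and A2_semigroup: "C0_semigroup S"
    and A2_limit: "\<And>u T \<epsilon>. \<epsilon> > 0 \<Longrightarrow> \<exists>\<delta>>0. \<forall>l v t s. 0 < l \<and> l < \<delta> \<and> dist v u < \<delta> \<and>
                      0 \<le> s \<and> s \<le> t \<and> t \<le> T \<longrightarrow>
                      dist (blinfun_apply (R l t s) v) (blinfun_apply (S (t - s)) u) < \<epsilon>"
    and A3_cont: "continuous_on ({0..} \<times> UNIV) (\<lambda>(t, v). F t v)"
    and A3_lip: "\<And>B. bounded B \<Longrightarrow> \<exists>L. \<forall>t\<ge>0. \<forall>x\<in>B. \<forall>y\<in>B. dist (F t x) (F t y) \<le> L * dist x y"
    and A3_growth: "\<exists>c>0. \<forall>t\<ge>0. \<forall>v. norm (F t v) \<le> c * (1 + norm v)"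
    and A4_compact: "\<And>u. compact (closure {F t u | t. t \<ge> 0})"
    and A4_avg: "\<And>u \<epsilon>. \<epsilon> > 0 \<Longrightarrow> \<exists>T0 \<delta>. \<delta> > 0 \<and> (\<forall>T v h. T \<ge> T0 \<and> T > 0 \<and> dist v u < \<delta> \<and> h > 0 \<longrightarrow>
                      dist ((1 / T) *\<^sub>R integral {0..T} (\<lambda>\<tau>. F (\<tau> + h) v)) (Fh u) < \<epsilon>)"
begin

definition cF where "cF = (SOME c. c > 0 \<and> (\<forall>t\<ge>0. \<forall>v. norm (F t v) \<le> c * (1 + norm v)))"

lemma cF: "cF > 0" "\<And>t v. 0 \<le> t \<Longrightarrow> norm (F t v) \<le> cF * (1 + norm v)"
  using someI_ex[OF A3_growth] unfolding cF_def by auto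

definition NT where "NT T = M * exp (\<bar>\<omega>\<bar> * T)"

lemma NT_pos: "NT T > 0" using A1(1) by (simp add: NT_def)

lemma S_bound: assumes "0 \<le> \<sigma>" shows "norm (S \<sigma>) \<le> M * exp (\<omega> * \<sigma>)"
proof (rule norm_blinfun_bound)
  show "0 \<le> M * exp (\<omega> * \<sigma>)" using A1(1) by simp
  fix x
  show "norm (blinfun_apply (S \<sigma>) x) \<le> M * exp (\<omega> * \<sigma>) * norm x"
  proof (rule field_le_epsilon)
    fix e :: real assume e: "0 < e"
    obtain \<delta> where \<delta>: "\<delta> > 0" and H: "\<forall>l v t s. 0 < l \<and> l < \<delta> \<and> dist v x < \<delta> \<and> 0 \<le> s \<and> s \<le> t \<and> t \<le> \<sigma> \<longrightarrow>
                      dist (blinfun_apply (R l t s) v) (blinfun_apply (S (t - s)) x) < e"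
      using A2_limit[OF e, of x \<sigma>] by blast
    have d: "dist (blinfun_apply (R (\<delta>/2) \<sigma> 0) x) (blinfun_apply (S \<sigma>) x) < e"
      using H[rule_format, of "\<delta>/2" x 0 \<sigma>] \<delta> assms by simp
    have "norm (blinfun_apply (R (\<delta>/2) \<sigma> 0) x) \<le> norm (R (\<delta>/2) \<sigma> 0) * norm x" by (rule norm_blinfun)
    also have "\<dots> \<le> M * exp (\<omega> * \<sigma>) * norm x"
      using A1(2)[of "\<delta>/2" 0 \<sigma>] \<delta> assms by (simp add: mult_right_mono)
    finally have "norm (blinfun_apply (R (\<delta>/2) \<sigma> 0) x) \<le> M * exp (\<omega> * \<sigma>) * norm x" .
    then show "norm (blinfun_apply (S \<sigma>) x) \<le> M * exp (\<omega> * \<sigma>) * norm x + e"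
      using d norm_triangle_ineq3[of "blinfun_apply (S \<sigma>) x" "blinfun_apply (R (\<delta>/2) \<sigma> 0) x"]
      by (simp add: dist_norm norm_minus_commute)
  qed
qed

lemma exp_le_NT: assumes "0 \<le> x" "x \<le> T" shows "M * exp (\<omega> * x) \<le> NT T"
proof -
  have "\<omega> * x \<le> \<bar>\<omega>\<bar> * x" using mult_right_mono[OF abs_ge_self assms(1)] by simp
  also have "\<dots> \<le> \<bar>\<omega>\<bar> * T" using assms by (simp add: mult_left_mono)
  finally have "exp (\<omega> * x) \<le> exp (\<bar>\<omega>\<bar> * T)" by simp
  then show ?thesis unfolding NT_def using A1(1) by simp
qed

lemma S_NT: "0 \<le> s \<Longrightarrow> s \<le> t \<Longrightarrow> t \<le> T \<Longrightarrow> norm (S (t - s)) \<le> NT T"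
  using S_bound[of "t - s"] exp_le_NT[of "t - s" T] by auto

lemma R_NT: "0 < l \<Longrightarrow> 0 \<le> s \<Longrightarrow> s \<le> t \<Longrightarrow> t \<le> T \<Longrightarrow> norm (R l t s) \<le> NT T"
  using A1(2)[of l s t] exp_le_NT[of "t - s" T] by auto

lemma S_cont0: "continuous_on {0..} (\<lambda>t. blinfun_apply (S t) u)"
  using A2_semigroup by (simp add: C0_semigroup_def)

lemma S_kernel: "continuous_on {(s,t). 0\<le>s \<and> s\<le>t} (\<lambda>(s,t). blinfun_apply (S (t - s)) u)"
proof -
  have "continuous_on {(s,t). 0\<le>s \<and> s\<le>t} (\<lambda>p. (\<lambda>t. blinfun_apply (S t) u) (snd p - fst p))"
    by (rule continuous_on_compose2[OF S_cont0]) (auto intro!: continuous_intros)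
  then show ?thesis by (simp add: case_prod_beta)
qed

lemma R_kernel: "0 < l \<Longrightarrow> continuous_on {(s,t). 0\<le>s \<and> s\<le>t} (\<lambda>(s,t). blinfun_apply (R l t s) u)"
  using evol[of l] by (simp add: evolution_system_def)

lemma F_cont_scaled: "0 < l \<Longrightarrow> continuous_on ({0..} \<times> UNIV) (\<lambda>(t, v). F (t / l) v)"
proof -
  assume l: "0 < l"
  have "continuous_on ({0..} \<times> UNIV) (\<lambda>p. (\<lambda>(t, v). F t v) (fst p / l, snd p))"
    by (rule continuous_on_compose2[OF A3_cont]) (use l in \<open>auto intro!: continuous_intros\<close>)
  then show ?thesis by (simp add: case_prod_beta)
qed

lemma F_cont_comp: "continuous_on A g \<Longrightarrow> continuous_on A h \<Longrightarrow> (\<And>x. x \<in> A \<Longrightarrow> 0 \<le> g x) \<Longrightarrow>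
    continuous_on A (\<lambda>x. F (g x) (h x))"
proof -
  assume "continuous_on A g" "continuous_on A h" "\<And>x. x \<in> A \<Longrightarrow> 0 \<le> g x"
  then have "continuous_on A (\<lambda>x. (\<lambda>(t, v). F t v) (g x, h x))"
    by (intro continuous_on_compose2[OF A3_cont]) (auto intro!: continuous_intros)
  then show ?thesis by simp
qed

end

context avg_setting begin

definition avg where "avg T h v = (1 / T) *\<^sub>R integral {0..T} (\<lambda>\<tau>. F (\<tau> + h) v)"

lemma F_integrable: "0 \<le> h \<Longrightarrow> (\<lambda>\<tau>. F (\<tau> + h) v) integrable_on {0..T}"
proof -
  assume h: "0 \<le> h"
  have "continuous_on {0..T} (\<lambda>\<tau>. F (\<tau> + h) v)"
    using F_cont_comp[of "{0..T}" "\<lambda>\<tau>. \<tau> + h" "\<lambda>\<tau>. v"] h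
    by (simp add: continuous_on_add continuous_on_const continuous_on_id)
  then show ?thesis by (rule integrable_continuous_real)
qed

lemma avg_growth: "0 < T \<Longrightarrow> 0 \<le> h \<Longrightarrow> norm (avg T h v) \<le> cF * (1 + norm v)"
proof -
  assume T: "0 < T" "0 \<le> h"
  have "norm (integral {0..T} (\<lambda>\<tau>. F (\<tau> + h) v)) \<le> cF * (1 + norm v) * (T - 0)"
    by (rule int_bound_real[OF F_integrable]) (use T cF(2) in auto)
  then show ?thesis using T by (simp add: avg_def field_simps)
qed

lemma avg_lip:
  assumes T: "0 < T" "0 \<le> h" and L: "\<forall>t\<ge>0. \<forall>x\<in>B. \<forall>y\<in>B. dist (F t x) (F t y) \<le> L * dist x y"
    and xy: "x \<in> B" "y \<in> B"
  shows "dist (avg T h x) (avg T h y) \<le> L * dist x y"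
proof -
  have "norm (integral {0..T} (\<lambda>\<tau>. F (\<tau> + h) x) - integral {0..T} (\<lambda>\<tau>. F (\<tau> + h) y)) =
      norm (integral {0..T} (\<lambda>\<tau>. F (\<tau> + h) x - F (\<tau> + h) y))"
    by (simp add: integral_diff[OF F_integrable F_integrable] T)
  also have "\<dots> \<le> L * dist x y * (T - 0)"
    by (rule int_bound_real) (use T L xy in \<open>auto intro!: integrable_diff F_integrable simp: dist_norm\<close>)
  finally have I: "norm (integral {0..T} (\<lambda>\<tau>. F (\<tau> + h) x) - integral {0..T} (\<lambda>\<tau>. F (\<tau> + h) y)) \<le> L * dist x y * T"
    by simp
  have "dist (avg T h x) (avg T h y) = (1 / T) * norm (integral {0..T} (\<lambda>\<tau>. F (\<tau> + h) x) - integral {0..T} (\<lambda>\<tau>. F (\<tau> + h) y))"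
    unfolding avg_def dist_norm using T by (simp flip: scaleR_diff_right)
  also have "\<dots> \<le> (1 / T) * (L * dist x y * T)"
    by (rule mult_left_mono[OF I]) (use T in simp)
  also have "\<dots> = L * dist x y" using T by simp
  finally show ?thesis .
qed

lemma avg_lim:
  assumes e: "e > 0"
  shows "\<exists>T0. \<forall>T. T \<ge> T0 \<longrightarrow> T > 0 \<longrightarrow> dist (avg T 1 u) (Fh u) < e"
proof -
  obtain T0 \<delta> where "\<delta> > 0" "\<forall>T v h. T \<ge> T0 \<and> T > 0 \<and> dist v u < \<delta> \<and> h > 0 \<longrightarrow>
                      dist ((1 / T) *\<^sub>R integral {0..T} (\<lambda>\<tau>. F (\<tau> + h) v)) (Fh u) < e"
    using A4_avg[OF e, of u] by blast
  then have "\<forall>T. T \<ge> T0 \<longrightarrow> T > 0 \<longrightarrow> dist (avg T 1 u) (Fh u) < e"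
    unfolding avg_def by (metis dist_self zero_less_one)
  then show ?thesis by blast
qed

lemma Fh_growth: "norm (Fh v) \<le> cF * (1 + norm v)"
proof (rule field_le_epsilon)
  fix e :: real assume e: "0 < e"
  obtain T0 where T0: "\<And>T. T \<ge> T0 \<Longrightarrow> T > 0 \<Longrightarrow> dist (avg T 1 v) (Fh v) < e"
    using avg_lim[OF e] by blast
  define T where "T = max T0 1"
  have "dist (avg T 1 v) (Fh v) < e" using T0[of T] by (simp add: T_def)
  moreover have "norm (avg T 1 v) \<le> cF * (1 + norm v)" by (rule avg_growth) (auto simp: T_def)
  ultimately show "norm (Fh v) \<le> cF * (1 + norm v) + e"
    using norm_triangle_ineq3[of "Fh v" "avg T 1 v"] by (simp add: dist_norm norm_minus_commute)
qed

lemma Fh_lip: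
  assumes L: "\<forall>t\<ge>0. \<forall>x\<in>B. \<forall>y\<in>B. dist (F t x) (F t y) \<le> L * dist x y" and xy: "x \<in> B" "y \<in> B"
  shows "dist (Fh x) (Fh y) \<le> L * dist x y"
proof (rule field_le_epsilon)
  fix e :: real assume e: "0 < e"
  obtain T1 where T1: "\<And>T. T \<ge> T1 \<Longrightarrow> T > 0 \<Longrightarrow> dist (avg T 1 x) (Fh x) < e/2"
    using avg_lim[of "e/2" x] e by (metis half_gt_zero)
  obtain T2 where T2: "\<And>T. T \<ge> T2 \<Longrightarrow> T > 0 \<Longrightarrow> dist (avg T 1 y) (Fh y) < e/2"
    using avg_lim[of "e/2" y] e by (metis half_gt_zero)
  define T where "T = max (max T1 T2) 1"
  have 1: "dist (avg T 1 x) (Fh x) < e/2" using T1[of T] by (simp add: T_def)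
  have 2: "dist (avg T 1 y) (Fh y) < e/2" using T2[of T] by (simp add: T_def)
  have 3: "dist (avg T 1 x) (avg T 1 y) \<le> L * dist x y" by (rule avg_lip[OF _ _ L xy]) (auto simp: T_def)
  show "dist (Fh x) (Fh y) \<le> L * dist x y + e"
    using 1 2 3 dist_triangle[of "Fh x" "Fh y" "avg T 1 x"] dist_triangle[of "avg T 1 x" "Fh y" "avg T 1 y"]
    by (simp add: dist_commute)
qed

lemma Fh_lipB: "bounded B \<Longrightarrow> \<exists>L. \<forall>x\<in>B. \<forall>y\<in>B. dist (Fh x) (Fh y) \<le> L * dist x y"
proof -
  assume "bounded B"
  then obtain L where "\<forall>t\<ge>0. \<forall>x\<in>B. \<forall>y\<in>B. dist (F t x) (F t y) \<le> L * dist x y"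
    using A3_lip by blast
  then show ?thesis using Fh_lip by blast
qed

lemma Fh_cont: "continuous_on UNIV Fh"
  unfolding continuous_on_iff
proof (intro ballI allI impI)
  fix x and e :: real assume e: "e > 0"
  obtain L where L: "\<forall>a\<in>cball x 1. \<forall>b\<in>cball x 1. dist (Fh a) (Fh b) \<le> L * dist a b"
    using Fh_lipB[of "cball x 1"] by auto
  define d where "d = min 1 (e / (\<bar>L\<bar> + 1))"
  show "\<exists>d>0. \<forall>x'\<in>UNIV. dist x' x < d \<longrightarrow> dist (Fh x') (Fh x) < e"
  proof (intro exI[of _ d] conjI ballI impI)
    show "d > 0" using e by (simp add: d_def)
    fix y assume y: "dist y x < d"
    have "dist (Fh y) (Fh x) \<le> L * dist y x" using L y by (auto simp: d_def dist_commute)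
    also have "\<dots> \<le> \<bar>L\<bar> * dist y x" by (simp add: mult_right_mono)
    also have "\<dots> \<le> \<bar>L\<bar> * d" using y by (simp add: mult_left_mono)
    also have "\<dots> < e"
    proof -
      have "\<bar>L\<bar> * d \<le> \<bar>L\<bar> * (e / (\<bar>L\<bar> + 1))" unfolding d_def by (rule mult_left_mono) auto
      also have "\<dots> < e" using e by (simp add: field_simps)
      finally show ?thesis .
    qed
    finally show "dist (Fh y) (Fh x) < e" .
  qed
qed

end

context avg_setting begin

lemma A2_compact:
  assumes C: "compact C" and e: "e > 0"
  shows "\<exists>\<delta>>0. \<forall>l y s t. 0 < l \<and> l < \<delta> \<and> y \<in> C \<and> 0 \<le> s \<and> s \<le> t \<and> t \<le> T \<longrightarrow>
      dist (blinfun_apply (R l t s) y) (blinfun_apply (S (t - s)) y) < e"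
proof -
  have "\<forall>u\<in>C. \<exists>d>0. \<forall>l v t s. 0 < l \<and> l < d \<and> dist v u < d \<and> 0 \<le> s \<and> s \<le> t \<and> t \<le> T \<longrightarrow>
                      dist (blinfun_apply (R l t s) v) (blinfun_apply (S (t - s)) u) < e/2"
    using A2_limit e by (metis half_gt_zero)
  then obtain d where d: "\<And>u. u \<in> C \<Longrightarrow> d u > 0"
    and dH: "\<And>u l v t s. u \<in> C \<Longrightarrow> 0 < l \<Longrightarrow> l < d u \<Longrightarrow> dist v u < d u \<Longrightarrow> 0 \<le> s \<Longrightarrow> s \<le> t \<Longrightarrow> t \<le> T \<Longrightarrow>
                      dist (blinfun_apply (R l t s) v) (blinfun_apply (S (t - s)) u) < e/2"
    by metis
  define \<rho> where "\<rho> u = min (d u) (e / (2 * NT T))" for u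
  have \<rho>: "\<rho> u > 0" if "u \<in> C" for u using d[OF that] e NT_pos by (simp add: \<rho>_def)
  obtain C' where C': "C' \<subseteq> C" "finite C'" "C \<subseteq> (\<Union>u\<in>C'. ball u (\<rho> u))"
    by (rule compactE_image[OF C, of C "\<lambda>u. ball u (\<rho> u)"]) (use \<rho> in auto)
  define \<delta> where "\<delta> = (if C' = {} then 1 else Min (\<rho> ` C'))"
  have \<delta>0: "\<delta> > 0" using C' \<rho> by (auto simp: \<delta>_def)
  have \<delta>le: "\<delta> \<le> \<rho> u" if "u \<in> C'" for u using C' that by (auto simp: \<delta>_def)
  show ?thesis
  proof (intro exI[of _ \<delta>] conjI \<delta>0 allI impI)
    fix l y s t assume H: "0 < l \<and> l < \<delta> \<and> y \<in> C \<and> 0 \<le> s \<and> s \<le> t \<and> t \<le> T"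
    then obtain u where u: "u \<in> C'" "dist u y < \<rho> u" using C' by auto
    have uC: "u \<in> C" using u C' by auto
    have 1: "dist (blinfun_apply (R l t s) y) (blinfun_apply (S (t - s)) u) < e/2"
      by (rule dH[OF uC]) (use H u \<delta>le[OF u(1)] in \<open>auto simp: \<rho>_def dist_commute\<close>)
    have "dist (blinfun_apply (S (t - s)) u) (blinfun_apply (S (t - s)) y) = norm (blinfun_apply (S (t - s)) (u - y))"
      by (simp add: dist_norm blinfun.diff_right)
    also have "\<dots> \<le> norm (S (t - s)) * norm (u - y)" by (rule norm_blinfun)
    also have "\<dots> \<le> NT T * norm (u - y)" using S_NT[of s t T] H by (simp add: mult_right_mono)
    also have "\<dots> < NT T * (e / (2 * NT T))"
      using u(2) NT_pos[of T] by (intro mult_strict_left_mono) (auto simp: \<rho>_def dist_norm)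
    also have "\<dots> = e / 2" using NT_pos[of T] by simp
    finally have 2: "dist (blinfun_apply (S (t - s)) u) (blinfun_apply (S (t - s)) y) < e/2" .
    show "dist (blinfun_apply (R l t s) y) (blinfun_apply (S (t - s)) y) < e"
      using 1 2 dist_triangle[of "blinfun_apply (R l t s) y" "blinfun_apply (S (t - s)) y" "blinfun_apply (S (t - s)) u"]
      by linarith
  qed
qed

lemma Fvals_compact:
  assumes U: "compact U"
  shows "compact (closure {F s w | s w. 0 \<le> s \<and> w \<in> U})"
proof -
  define X where "X = {F s w | s w. 0 \<le> s \<and> w \<in> U}"
  obtain L where L: "\<forall>t\<ge>0. \<forall>x\<in>U. \<forall>y\<in>U. dist (F t x) (F t y) \<le> L * dist x y"
    using A3_lip[OF compact_imp_bounded[OF U]] by blast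
  define L' where "L' = \<bar>L\<bar> + 1"
  have L'0: "L' > 0" by (simp add: L'_def)
  have cover: "\<exists>k. finite k \<and> closure X \<subseteq> (\<Union>x\<in>k. ball x e)" if e: "e > 0" for e
  proof -
    define r where "r = e / (4 * L')"
    have r: "r > 0" using e L'0 by (simp add: r_def)
    obtain C' where C': "C' \<subseteq> U" "finite C'" "U \<subseteq> (\<Union>u\<in>C'. ball u r)"
      by (rule compactE_image[OF U, of U "\<lambda>u. ball u r"]) (use r in auto)
    have e4: "e/4 > 0" using e by simp
    have "\<exists>k. finite k \<and> closure {F t w | t. t \<ge> 0} \<subseteq> (\<Union>x\<in>k. ball x (e/4))" for w
    proof -
      have "complete (closure {F t w | t. t \<ge> 0}) \<and> (\<forall>\<epsilon>>0. \<exists>k. finite k \<and> closure {F t w | t. t \<ge> 0} \<subseteq> (\<Union>x\<in>k. ball x \<epsilon>))"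
        using A4_compact[of w] unfolding compact_eq_totally_bounded .
      then show ?thesis using e4 by blast
    qed
    then have "\<forall>w\<in>C'. \<exists>k. finite k \<and> closure {F t w | t. t \<ge> 0} \<subseteq> (\<Union>x\<in>k. ball x (e/4))" by blast
    from bchoice[OF this] obtain kw where kw0: "\<forall>w\<in>C'. finite (kw w) \<and> closure {F t w | t. t \<ge> 0} \<subseteq> (\<Union>x\<in>kw w. ball x (e/4))"
      by (elim exE)
    then have kw: "\<And>w. w \<in> C' \<Longrightarrow> finite (kw w) \<and> closure {F t w | t. t \<ge> 0} \<subseteq> (\<Union>x\<in>kw w. ball x (e/4))"
      by blast
    define k where "k = (\<Union>w\<in>C'. kw w)"
    have kf: "finite k" unfolding k_def by (rule finite_UN_I[OF C'(2)]) (use kw in blast)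
    have Xk: "X \<subseteq> (\<Union>x\<in>k. cball x (e/2))"
    proof
      fix z assume "z \<in> X"
      then obtain s v where z: "z = F s v" "0 \<le> s" "v \<in> U" by (auto simp: X_def)
      then obtain w where w: "w \<in> C'" "dist w v < r" using C' by auto
      have wU: "w \<in> U" using w C' by auto
      have "F s w \<in> {F t w | t. t \<ge> 0}" using z by blast
      then have "F s w \<in> closure {F t w | t. t \<ge> 0}" by (rule closure_subset[THEN subsetD])
      then obtain p where p: "p \<in> kw w" "dist p (F s w) < e/4" using kw[OF w(1)] by auto
      have "dist (F s v) (F s w) \<le> L * dist v w" using L z wU by blast
      also have "\<dots> \<le> L' * dist v w" by (simp add: L'_def mult_right_mono)
      also have "\<dots> \<le> L' * r" using w L'0 by (simp add: dist_commute)
      also have "\<dots> = e / 4" using L'0 by (simp add: r_def)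
      finally have "dist (F s v) (F s w) \<le> e / 4" .
      then have "dist p z \<le> e / 2"
        using p z dist_triangle[of p "F s v" "F s w"] by (simp add: dist_commute)
      moreover have "p \<in> k" using p w by (auto simp: k_def)
      ultimately show "z \<in> (\<Union>x\<in>k. cball x (e/2))" by auto
    qed
    have "closed (\<Union>x\<in>k. cball x (e/2))" by (rule closed_UN) (use kf in auto)
    then have "closure X \<subseteq> (\<Union>x\<in>k. cball x (e/2))"
      by (rule closure_minimal[OF Xk])
    also have "\<dots> \<subseteq> (\<Union>x\<in>k. ball x e)"
    proof (rule UN_mono)
      fix x show "cball x (e/2) \<subseteq> ball x e" using e by (simp add: subset_iff)
    qed simp
    finally show ?thesis using kf by blast
  qed
  have "complete (closure X)" by (simp add: complete_eq_closed)
  then have "compact (closure X)" unfolding compact_eq_totally_bounded using cover by blast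
  then show ?thesis by (simp add: X_def)
qed

lemma avg_compact:
  assumes U: "compact U" and e: "e > 0"
  shows "\<exists>T0>0. \<forall>T (h::real) w. T \<ge> T0 \<and> h > 0 \<and> w \<in> U \<longrightarrow> dist (avg T h w) (Fh w) < e"
proof -
  have "\<forall>u\<in>U. \<exists>T0 d. d > 0 \<and> (\<forall>T v (h::real). T \<ge> T0 \<and> T > 0 \<and> dist v u < d \<and> h > 0 \<longrightarrow> dist (avg T h v) (Fh u) < e/2)"
    using A4_avg e unfolding avg_def by (metis half_gt_zero)
  then obtain T0 d where d: "\<And>u. u \<in> U \<Longrightarrow> d u > 0"
    and dH: "\<And>u T v h. u \<in> U \<Longrightarrow> T \<ge> T0 u \<Longrightarrow> T > 0 \<Longrightarrow> dist v u < d u \<Longrightarrow> h > 0 \<Longrightarrow> dist (avg T h v) (Fh u) < e/2"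
    by metis
  have "\<forall>u. \<exists>dc>0. \<forall>v. dist v u < dc \<longrightarrow> dist (Fh v) (Fh u) < e/2"
    using Fh_cont e unfolding continuous_on_iff by (metis UNIV_I half_gt_zero)
  then obtain dc where dc: "\<And>u. dc u > 0" and dcH: "\<And>u v. dist v u < dc u \<Longrightarrow> dist (Fh v) (Fh u) < e/2"
    by metis
  define \<rho> where "\<rho> u = min (d u) (dc u)" for u
  have \<rho>: "\<rho> u > 0" if "u \<in> U" for u using d[OF that] dc[of u] by (simp add: \<rho>_def)
  obtain C' where C': "C' \<subseteq> U" "finite C'" "U \<subseteq> (\<Union>u\<in>C'. ball u (\<rho> u))"
    by (rule compactE_image[OF U, of U "\<lambda>u. ball u (\<rho> u)"]) (use \<rho> in auto)
  define T1 where "T1 = max 1 (if C' = {} then 1 else Max (T0 ` C'))"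
  have T1: "T1 > 0" by (simp add: T1_def)
  have T1le: "T0 u \<le> T1" if "u \<in> C'" for u
    using C' that by (auto simp: T1_def intro!: max.coboundedI2)
  show ?thesis
  proof (intro exI[of _ T1] conjI T1 allI impI)
    fix T h :: real and w assume H: "T1 \<le> T \<and> 0 < h \<and> w \<in> U"
    then obtain u where u: "u \<in> C'" "dist u w < \<rho> u" using C' by auto
    have uU: "u \<in> U" using u C' by auto
    have 1: "dist (avg T h w) (Fh u) < e/2"
      by (rule dH[OF uU]) (use H u T1le[OF u(1)] T1 in \<open>auto simp: \<rho>_def dist_commute\<close>)
    have 2: "dist (Fh w) (Fh u) < e/2"
      by (rule dcH) (use u in \<open>auto simp: \<rho>_def dist_commute\<close>)
    show "dist (avg T h w) (Fh w) < e"
      using 1 2 dist_triangle[of "avg T h w" "Fh w" "Fh u"] by (simp add: dist_commute)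
  qed
qed

lemma subst_avg:
  assumes l: "0 < l" and a: "0 \<le> a" and H: "0 < H"
  shows "integral {a..a+H} (\<lambda>\<tau>. F (\<tau> / l) w) = H *\<^sub>R avg (H / l) (a / l) w"
proof -
  define J where "J = integral {0..H/l} (\<lambda>s. F (s + a / l) w)"
  have g: "((\<lambda>s. F (s + a / l) w) has_integral J) {0..H/l}"
    unfolding J_def by (rule integrable_integral[OF F_integrable]) (use l a in simp)
  have "((\<lambda>x. F (x + (- (a / l)) + a / l) w) has_integral J) {0 - (- (a / l)) .. H/l - (- (a / l))}"
    by (rule has_integral_shift_real_ivl[OF g])
  then have sh: "((\<lambda>x. F x w) has_integral J) {a / l .. H / l + a / l}" by simp
  have "((\<lambda>x. F ((1 / l) * x) w) has_integral (1 / \<bar>1 / l\<bar>) *\<^sub>R J) ((\<lambda>x. x / (1 / l)) ` {a / l .. H / l + a / l})"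
    by (rule has_integral_stretch_real[OF sh]) (use l in simp)
  moreover have "(\<lambda>x. x / (1 / l)) ` {a / l .. H / l + a / l} = {a..a+H}"
  proof -
    have ee: "(\<lambda>x. x / (1 / l)) = (*) l" by (rule ext) simp
    have "(\<lambda>x. x / (1 / l)) ` {a / l .. H / l + a / l} = (*) l ` {a / l .. H / l + a / l}" by (simp only: ee)
    also have "\<dots> = {l * (a / l) .. l * (H / l + a / l)}" using l by simp
    also have "\<dots> = {a..a+H}" using l by (simp add: field_simps)
    finally show ?thesis .
  qed
  ultimately have "((\<lambda>\<tau>. F (\<tau> / l) w) has_integral l *\<^sub>R J) {a..a+H}"
    using l by (simp add: divide_inverse mult.commute)
  then have "integral {a..a+H} (\<lambda>\<tau>. F (\<tau> / l) w) = l *\<^sub>R J" by (rule integral_unique)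
  also have "\<dots> = H *\<^sub>R avg (H / l) (a / l) w"
    using l H by (simp add: avg_def J_def)
  finally show ?thesis .
qed

lemma S_apply_cont:
  assumes y: "continuous_on {0..t} y"
  shows "continuous_on {0..t} (\<lambda>\<tau>. blinfun_apply (S (t - \<tau>)) (y \<tau>))"
proof (rule cont_apply[OF _ _ y])
  fix u
  show "continuous_on {0..t} (\<lambda>\<tau>. blinfun_apply (S (t - \<tau>)) u)"
    by (rule continuous_on_compose2[OF S_cont0]) (auto intro!: continuous_intros)
  show "\<And>\<tau>. \<tau> \<in> {0..t} \<Longrightarrow> norm (S (t - \<tau>)) \<le> NT t"
    by (rule S_NT) auto
qed

lemma R_apply_cont:
  assumes l: "0 < l" and y: "continuous_on {0..t} y"
  shows "continuous_on {0..t} (\<lambda>\<tau>. blinfun_apply (R l t \<tau>) (y \<tau>))"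
proof (rule cont_apply[OF _ _ y])
  fix u
  have "continuous_on {0..t} (\<lambda>\<tau>. (\<lambda>(s,t). blinfun_apply (R l t s) u) (\<tau>, t))"
    by (rule continuous_on_compose2[OF R_kernel[OF l]]) (auto intro!: continuous_intros)
  then show "continuous_on {0..t} (\<lambda>\<tau>. blinfun_apply (R l t \<tau>) u)" by simp
  show "\<And>\<tau>. \<tau> \<in> {0..t} \<Longrightarrow> norm (R l t \<tau>) \<le> NT t"
    by (rule R_NT[OF l]) auto
qed

end

lemma pieces:
  fixes f :: "real \<Rightarrow> 'a::banach"
  assumes "f integrable_on {a..a + real N * h}" "0 \<le> h"
    and "\<And>j. j < N \<Longrightarrow> norm (integral {a + real j * h .. a + real (Suc j) * h} f) \<le> B"
  shows "norm (integral {a..a + real N * h} f) \<le> real N * B"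
  using assms
proof (induction N)
  case 0 then show ?case by simp
next
  case (Suc N)
  have int: "f integrable_on {a..a + real N * h}"
    by (rule integrable_on_subinterval[OF Suc.prems(1)]) (use Suc.prems(2) in \<open>auto intro: mult_right_mono\<close>)
  have IH: "norm (integral {a..a + real N * h} f) \<le> real N * B"
    by (rule Suc.IH[OF int Suc.prems(2)]) (use Suc.prems(3) in auto)
  have comb: "integral {a..a + real N * h} f + integral {a + real N * h..a + real (Suc N) * h} f = integral {a..a + real (Suc N) * h} f"
    by (rule Henstock_Kurzweil_Integration.integral_combine) (use Suc.prems(1,2) in \<open>auto simp: distrib_right\<close>)
  have last: "norm (integral {a + real N * h..a + real (Suc N) * h} f) \<le> B" using Suc.prems(3) by simp
  have "norm (integral {a..a + real (Suc N) * h} f) \<le> norm (integral {a..a + real N * h} f) + norm (integral {a + real N * h..a + real (Suc N) * h} f)"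
    unfolding comb[symmetric] by (rule norm_triangle_ineq)
  also have "\<dots> \<le> real N * B + B" using IH last by linarith
  finally show ?case by (simp add: distrib_right)
qed

context avg_setting begin

lemma piece_bound:
  assumes l: "0 < l" and h: "0 < h" and a: "0 < a" and ab: "a + h \<le> t" and tT: "t \<le> T"
    and uc: "continuous_on {0..} u"
    and SU: "\<And>\<sigma> \<sigma>' y. \<sigma> \<in> {0..T} \<Longrightarrow> \<sigma>' \<in> {0..T} \<Longrightarrow> y \<in> C \<Longrightarrow> \<bar>\<sigma> - \<sigma>'\<bar> \<le> h \<Longrightarrow>
              dist (blinfun_apply (S \<sigma>) y) (blinfun_apply (S \<sigma>') y) \<le> e1"
    and UU: "\<And>\<tau> \<tau>'. \<tau> \<in> {0..T} \<Longrightarrow> \<tau>' \<in> {0..T} \<Longrightarrow> \<bar>\<tau> - \<tau>'\<bar> \<le> h \<Longrightarrow> norm (u \<tau> - u \<tau>') \<le> e2"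
    and yC: "\<And>\<tau>. \<tau> \<in> {0..T} \<Longrightarrow> F (\<tau> / l) (u \<tau>) - Fh (u \<tau>) \<in> C"
    and LF: "\<And>s \<tau> \<tau>'. 0 \<le> s \<Longrightarrow> \<tau> \<in> {0..T} \<Longrightarrow> \<tau>' \<in> {0..T} \<Longrightarrow> norm (F s (u \<tau>) - F s (u \<tau>')) \<le> Lp * norm (u \<tau> - u \<tau>')"
    and LFh: "\<And>\<tau> \<tau>'. \<tau> \<in> {0..T} \<Longrightarrow> \<tau>' \<in> {0..T} \<Longrightarrow> norm (Fh (u \<tau>) - Fh (u \<tau>')) \<le> Lp * norm (u \<tau> - u \<tau>')"
    and Lp: "0 \<le> Lp"
    and av: "norm (avg (h / l) (a / l) (u a) - Fh (u a)) \<le> e3"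
  shows "norm (integral {a..a+h} (\<lambda>\<tau>. blinfun_apply (S (t - \<tau>)) (F (\<tau> / l) (u \<tau>) - Fh (u \<tau>))))
          \<le> h * (e1 + NT T * (2 * Lp * e2) + NT T * e3)"
proof -
  define f where "f \<tau> = blinfun_apply (S (t - \<tau>)) (F (\<tau> / l) (u \<tau>) - Fh (u \<tau>))" for \<tau>
  define g where "g \<tau> = blinfun_apply (S (t - a)) (F (\<tau> / l) (u a) - Fh (u a))" for \<tau>
  have t0: "0 \<le> t" using a h ab by linarith
  have sub0: "{a..a+h} \<subseteq> {0..t}" using a ab by auto
  have ucT: "continuous_on {0..t} u" by (rule continuous_on_subset[OF uc]) auto
  have yc: "continuous_on {0..t} (\<lambda>\<tau>. F (\<tau> / l) (u \<tau>) - Fh (u \<tau>))"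
  proof (intro continuous_intros)
    show "continuous_on {0..t} (\<lambda>\<tau>. F (\<tau> / l) (u \<tau>))"
      by (rule F_cont_comp) (use l ucT in \<open>auto intro!: continuous_intros\<close>)
    show "continuous_on {0..t} (\<lambda>\<tau>. Fh (u \<tau>))"
      by (rule continuous_on_compose2[OF Fh_cont ucT]) auto
  qed
  have fc: "continuous_on {0..t} f" unfolding f_def by (rule S_apply_cont[OF yc])
  have fi: "f integrable_on {a..a+h}"
    by (rule integrable_on_subinterval[OF integrable_continuous_real[OF fc] sub0])
  have Fi: "(\<lambda>\<tau>. F (\<tau> / l) (u a)) integrable_on {a..a+h}"
  proof (rule integrable_continuous_real)
    show "continuous_on {a..a+h} (\<lambda>\<tau>. F (\<tau> / l) (u a))"
      by (rule F_cont_comp) (use l a in \<open>auto intro!: continuous_intros\<close>)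
  qed
  have gi0: "(\<lambda>\<tau>. F (\<tau> / l) (u a) - Fh (u a)) integrable_on {a..a+h}"
    by (intro integrable_diff Fi integrable_const_ivl)
  have gi: "g integrable_on {a..a+h}" unfolding g_def
    using integrable_linear[OF gi0 blinfun.bounded_linear_right, of "S (t - a)"] by (simp add: o_def)
  have aT: "a \<in> {0..T}" using a ab tT h by auto
  have pw: "norm (f \<tau> - g \<tau>) \<le> e1 + NT T * (2 * Lp * e2)" if \<tau>: "\<tau> \<in> {a..a+h}" for \<tau>
  proof -
    have \<tau>T: "\<tau> \<in> {0..T}" using \<tau> a ab tT by auto
    define y where "y = F (\<tau> / l) (u \<tau>) - Fh (u \<tau>)"
    define y' where "y' = F (\<tau> / l) (u a) - Fh (u a)"
    have "f \<tau> - g \<tau> = (blinfun_apply (S (t - \<tau>)) y - blinfun_apply (S (t - a)) y) + blinfun_apply (S (t - a)) (y - y')"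
      by (simp add: f_def g_def y_def y'_def blinfun.diff_right)
    then have "norm (f \<tau> - g \<tau>) \<le> norm (blinfun_apply (S (t - \<tau>)) y - blinfun_apply (S (t - a)) y) + norm (blinfun_apply (S (t - a)) (y - y'))"
      by (simp add: norm_triangle_ineq)
    moreover have "norm (blinfun_apply (S (t - \<tau>)) y - blinfun_apply (S (t - a)) y) \<le> e1"
      using SU[of "t - \<tau>" "t - a" y] yC[OF \<tau>T] \<tau> tT ab h a by (auto simp: dist_norm y_def)
    moreover have "norm (blinfun_apply (S (t - a)) (y - y')) \<le> NT T * (2 * Lp * e2)"
    proof -
      have "norm (blinfun_apply (S (t - a)) (y - y')) \<le> norm (S (t - a)) * norm (y - y')" by (rule norm_blinfun)
      also have "\<dots> \<le> NT T * (2 * Lp * e2)"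
      proof (rule mult_mono)
        show "norm (S (t - a)) \<le> NT T" using S_NT[of a t T] a ab tT h by auto
        have e: "y - y' = (F (\<tau> / l) (u \<tau>) - F (\<tau> / l) (u a)) - (Fh (u \<tau>) - Fh (u a))"
          by (simp add: y_def y'_def algebra_simps)
        have "norm (y - y') \<le> norm (F (\<tau> / l) (u \<tau>) - F (\<tau> / l) (u a)) + norm (Fh (u \<tau>) - Fh (u a))"
          unfolding e by (rule norm_triangle_ineq4)
        also have "\<dots> \<le> Lp * norm (u \<tau> - u a) + Lp * norm (u \<tau> - u a)"
          using LF[of "\<tau> / l" \<tau> a] LFh[of \<tau> a] \<tau>T aT \<tau> a l by (auto intro!: add_mono)
        also have "\<dots> \<le> Lp * e2 + Lp * e2"
          using UU[of \<tau> a] \<tau>T aT \<tau> Lp by (auto intro!: add_mono mult_left_mono)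
        finally show "norm (y - y') \<le> 2 * Lp * e2" by simp
      qed (use NT_pos[of T] in auto)
      finally show ?thesis .
    qed
    ultimately show ?thesis by linarith
  qed
  have I1: "norm (integral {a..a+h} (\<lambda>\<tau>. f \<tau> - g \<tau>)) \<le> (e1 + NT T * (2 * Lp * e2)) * (a + h - a)"
    by (rule int_bound_real[OF integrable_diff[OF fi gi]]) (use h pw in auto)
  have "integral {a..a+h} g = blinfun_apply (S (t - a)) (integral {a..a+h} (\<lambda>\<tau>. F (\<tau> / l) (u a) - Fh (u a)))"
    unfolding g_def by (rule integral_blinfun_apply[OF gi0])
  also have "integral {a..a+h} (\<lambda>\<tau>. F (\<tau> / l) (u a) - Fh (u a)) = integral {a..a+h} (\<lambda>\<tau>. F (\<tau> / l) (u a)) - h *\<^sub>R Fh (u a)"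
    using integral_diff[OF Fi integrable_const_ivl[of "Fh (u a)" a "a+h"]] h by simp
  also have "\<dots> = h *\<^sub>R (avg (h / l) (a / l) (u a) - Fh (u a))"
    using subst_avg[OF l _ h, of a "u a"] a by (simp add: scaleR_diff_right)
  finally have gint: "integral {a..a+h} g = h *\<^sub>R blinfun_apply (S (t - a)) (avg (h / l) (a / l) (u a) - Fh (u a))"
    by (simp add: blinfun.scaleR_right)
  have I2: "norm (integral {a..a+h} g) \<le> h * (NT T * e3)"
  proof -
    have "norm (blinfun_apply (S (t - a)) (avg (h / l) (a / l) (u a) - Fh (u a))) \<le> norm (S (t - a)) * norm (avg (h / l) (a / l) (u a) - Fh (u a))"
      by (rule norm_blinfun)
    also have "\<dots> \<le> NT T * e3"
      by (rule mult_mono) (use S_NT[of a t T] a ab tT h av NT_pos[of T] in auto)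
    finally show ?thesis unfolding gint using h by (simp add: mult_left_mono)
  qed
  have "integral {a..a+h} f = integral {a..a+h} (\<lambda>\<tau>. f \<tau> - g \<tau>) + integral {a..a+h} g"
    using integral_diff[OF fi gi] by simp
  then have "norm (integral {a..a+h} f) \<le> norm (integral {a..a+h} (\<lambda>\<tau>. f \<tau> - g \<tau>)) + norm (integral {a..a+h} g)"
    by (simp add: norm_triangle_ineq)
  also have "\<dots> \<le> (e1 + NT T * (2 * Lp * e2)) * h + h * (NT T * e3)" using I1 I2 by simp
  also have "\<dots> = h * (e1 + NT T * (2 * Lp * e2) + NT T * e3)" by (simp add: algebra_simps)
  finally show ?thesis unfolding f_def .
qed

end

context avg_setting begin

lemma avg_term:
  assumes uc: "continuous_on {0..} u" and T: "0 < T" and eps: "0 < \<epsilon>"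
  shows "\<exists>\<delta>>0. \<forall>l t. 0 < l \<and> l < \<delta> \<and> t \<in> {0..T} \<longrightarrow>
     norm (integral {0..t} (\<lambda>\<tau>. blinfun_apply (S (t - \<tau>)) (F (\<tau> / l) (u \<tau>) - Fh (u \<tau>)))) \<le> \<epsilon>"
proof -
  have ucT: "continuous_on {0..T} u" by (rule continuous_on_subset[OF uc]) auto
  define U where "U = u ` {0..T}"
  have Uc: "compact U" unfolding U_def by (rule compact_continuous_image[OF ucT compact_Icc])
  obtain B0 where B0: "\<forall>x\<in>U. norm x \<le> B0" using compact_imp_bounded[OF Uc] bounded_iff by blast
  define Bu where "Bu = max B0 0"
  have Bu: "\<And>\<tau>. \<tau> \<in> {0..T} \<Longrightarrow> norm (u \<tau>) \<le> Bu" "0 \<le> Bu"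
    using B0 by (auto simp: U_def Bu_def intro: max.coboundedI1)
  define W where "W = closure {F s w | s w. 0 \<le> s \<and> w \<in> U}"
  have Wc: "compact W" unfolding W_def by (rule Fvals_compact[OF Uc])
  define V where "V = Fh ` U"
  have Vc: "compact V" unfolding V_def
    by (rule compact_continuous_image[OF continuous_on_subset[OF Fh_cont] Uc]) auto
  define C where "C = {x - y | x y. x \<in> W \<and> y \<in> V}"
  have Cc: "compact C" unfolding C_def by (rule compact_differences[OF Wc Vc])
  have yC: "F (\<tau> / l) (u \<tau>) - Fh (u \<tau>) \<in> C" if "\<tau> \<in> {0..T}" "0 < l" for \<tau> l
  proof -
    have "0 \<le> \<tau> / l" "u \<tau> \<in> U" using that by (auto simp: U_def)
    then have "F (\<tau> / l) (u \<tau>) \<in> {F s w | s w. 0 \<le> s \<and> w \<in> U}" by blast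
    then have "F (\<tau> / l) (u \<tau>) \<in> W" unfolding W_def by (rule closure_subset[THEN subsetD])
    moreover have "Fh (u \<tau>) \<in> V" using that by (auto simp: V_def U_def)
    ultimately show ?thesis unfolding C_def by blast
  qed
  obtain L where L: "\<forall>t\<ge>0. \<forall>x\<in>U. \<forall>y\<in>U. dist (F t x) (F t y) \<le> L * dist x y"
    using A3_lip[OF compact_imp_bounded[OF Uc]] by blast
  define Lp where "Lp = max L 0"
  have Lp: "0 \<le> Lp" by (simp add: Lp_def)
  have LF: "norm (F s (u \<tau>) - F s (u \<tau>')) \<le> Lp * norm (u \<tau> - u \<tau>')"
    if "0 \<le> s" "\<tau> \<in> {0..T}" "\<tau>' \<in> {0..T}" for s \<tau> \<tau>'
  proof -
    have "norm (F s (u \<tau>) - F s (u \<tau>')) \<le> L * norm (u \<tau> - u \<tau>')"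
      using L that by (auto simp: U_def dist_norm)
    also have "\<dots> \<le> Lp * norm (u \<tau> - u \<tau>')" by (simp add: Lp_def mult_right_mono)
    finally show ?thesis .
  qed
  have LFh: "norm (Fh (u \<tau>) - Fh (u \<tau>')) \<le> Lp * norm (u \<tau> - u \<tau>')"
    if "\<tau> \<in> {0..T}" "\<tau>' \<in> {0..T}" for \<tau> \<tau>'
  proof -
    have "dist (Fh (u \<tau>)) (Fh (u \<tau>')) \<le> L * dist (u \<tau>) (u \<tau>')"
      by (rule Fh_lip[OF L]) (use that in \<open>auto simp: U_def\<close>)
    also have "\<dots> \<le> Lp * dist (u \<tau>) (u \<tau>')" by (simp add: Lp_def mult_right_mono)
    finally show ?thesis by (simp add: dist_norm)
  qed
  define NS where "NS = NT T"
  have NS: "NS > 0" using NT_pos by (simp add: NS_def)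
  define e where "e = \<epsilon> / (2 * (T + 1))"
  have e: "e > 0" using eps T by (simp add: e_def)
  define e1 where "e1 = e / 3"
  define e2 where "e2 = e / (3 * (2 * NS * Lp + 1))"
  define e3 where "e3 = e / (3 * (NS + 1))"
  have NSLp: "0 \<le> NS * Lp" using NS Lp by simp
  have e1p: "e1 > 0" using e by (simp add: e1_def)
  have e2p: "e2 > 0" using e NSLp by (simp add: e2_def)
  have e3p: "e3 > 0" using e NS by (simp add: e3_def)
  have esum: "e1 + NS * (2 * Lp * e2) + NS * e3 \<le> e"
  proof -
    have a: "NS * (2 * Lp * e2) \<le> e / 3"
    proof -
      have "NS * (2 * Lp * e2) = (e / 3) * ((2 * NS * Lp) / (2 * NS * Lp + 1))"
        by (simp add: e2_def field_simps)
      also have "\<dots> \<le> (e / 3) * 1"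
        using e NSLp by (intro mult_left_mono) (auto simp: divide_le_eq_1)
      finally show ?thesis by simp
    qed
    have b: "NS * e3 \<le> e / 3"
    proof -
      have "NS * e3 = (e / 3) * (NS / (NS + 1))" by (simp add: e3_def field_simps)
      also have "\<dots> \<le> (e / 3) * 1" using e NS by (intro mult_left_mono) (auto simp: divide_le_eq_1)
      finally show ?thesis by simp
    qed
    show ?thesis using a b by (simp add: e1_def)
  qed
  define D where "D = {0..T} \<times> C"
  define \<Phi> where "\<Phi> p = blinfun_apply (S (fst p)) (snd p)" for p :: "real \<times> 'e"
  have \<Phi>c: "continuous_on D \<Phi>"
    unfolding \<Phi>_def
  proof (rule cont_apply)
    fix y
    show "continuous_on D (\<lambda>p. blinfun_apply (S (fst p)) y)"
      by (rule continuous_on_compose2[OF S_cont0]) (auto simp: D_def intro!: continuous_intros)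
    show "\<And>p. p \<in> D \<Longrightarrow> norm (S (fst p)) \<le> NS"
      using S_NT[of 0 _ T] by (auto simp: D_def NS_def)
    show "continuous_on D snd" by (intro continuous_intros)
  qed
  have Dc: "compact D" unfolding D_def by (rule compact_Times[OF compact_Icc Cc])
  obtain \<delta>1 where \<delta>1: "\<delta>1 > 0" and \<delta>1H: "\<And>p p'. p \<in> D \<Longrightarrow> p' \<in> D \<Longrightarrow> dist p' p < \<delta>1 \<Longrightarrow> dist (\<Phi> p') (\<Phi> p) < e1"
    using compact_uniformly_continuous[OF \<Phi>c Dc] e1p unfolding uniformly_continuous_on_def by metis
  obtain \<delta>2 where \<delta>2: "\<delta>2 > 0" and \<delta>2H: "\<And>x x'. x \<in> {0..T} \<Longrightarrow> x' \<in> {0..T} \<Longrightarrow> dist x' x < \<delta>2 \<Longrightarrow> dist (u x') (u x) < e2"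
    using compact_uniformly_continuous[OF ucT compact_Icc] e2p unfolding uniformly_continuous_on_def by metis
  define \<delta>m where "\<delta>m = min \<delta>1 \<delta>2"
  have \<delta>m: "\<delta>m > 0" using \<delta>1 \<delta>2 by (simp add: \<delta>m_def)
  define D' where "D' = NS * (2 * cF * (1 + Bu)) + 1"
  have D'p: "D' > 0" using NS cF(1) Bu(2) by (simp add: D'_def add_pos_nonneg)
  have fbound: "norm (blinfun_apply (S (t - \<tau>)) (F (\<tau> / l) (u \<tau>) - Fh (u \<tau>))) \<le> D'"
    if "0 < l" "0 \<le> \<tau>" "\<tau> \<le> t" "t \<le> T" for l \<tau> t
  proof -
    have "norm (blinfun_apply (S (t - \<tau>)) (F (\<tau> / l) (u \<tau>) - Fh (u \<tau>))) \<le> norm (S (t - \<tau>)) * norm (F (\<tau> / l) (u \<tau>) - Fh (u \<tau>))"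
      by (rule norm_blinfun)
    also have "\<dots> \<le> NS * (2 * cF * (1 + Bu))"
    proof (rule mult_mono)
      show "norm (S (t - \<tau>)) \<le> NS" using S_NT[of \<tau> t T] that by (simp add: NS_def)
      have "norm (F (\<tau> / l) (u \<tau>) - Fh (u \<tau>)) \<le> norm (F (\<tau> / l) (u \<tau>)) + norm (Fh (u \<tau>))"
        by (rule norm_triangle_ineq4)
      also have "\<dots> \<le> cF * (1 + norm (u \<tau>)) + cF * (1 + norm (u \<tau>))"
        using cF(2)[of "\<tau> / l" "u \<tau>"] Fh_growth[of "u \<tau>"] that by (auto intro!: add_mono)
      also have "\<dots> \<le> cF * (1 + Bu) + cF * (1 + Bu)"
        using Bu(1)[of \<tau>] that cF(1) by (intro add_mono mult_left_mono) auto
      finally show "norm (F (\<tau> / l) (u \<tau>) - Fh (u \<tau>)) \<le> 2 * cF * (1 + Bu)" by simp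
    qed (use NS in auto)
    finally show ?thesis by (simp add: D'_def)
  qed
  obtain T0 where T0: "T0 > 0" and T0H: "\<And>T' h w. T' \<ge> T0 \<Longrightarrow> h > 0 \<Longrightarrow> w \<in> U \<Longrightarrow> dist (avg T' h w) (Fh w) < e3"
    using avg_compact[OF Uc e3p] by blast
  obtain m :: nat where m: "max (T / \<delta>m) (2 * T * D' / \<epsilon>) < real m"
    using reals_Archimedean2 by blast
  define N where "N = Suc m"
  have Npos: "real N > 0" by (simp add: N_def)
  have TN1: "T / real N < \<delta>m"
  proof -
    have "T / \<delta>m < real N" using m by (simp add: N_def)
    then show ?thesis using \<delta>m Npos by (simp add: field_simps)
  qed
  have TN2: "T / real N * D' < \<epsilon> / 2"
  proof -
    have "2 * T * D' / \<epsilon> < real N" using m by (simp add: N_def)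
    then show ?thesis using eps Npos by (simp add: field_simps)
  qed
  define tstar where "tstar = \<epsilon> / D'"
  have ts: "tstar > 0" using eps D'p by (simp add: tstar_def)
  define \<delta> where "\<delta> = tstar / (real N * T0)"
  have \<delta>: "\<delta> > 0" using ts Npos T0 by (simp add: \<delta>_def)
  show ?thesis
  proof (intro exI[of _ \<delta>] conjI \<delta> allI impI)
    fix l t assume H: "0 < l \<and> l < \<delta> \<and> t \<in> {0..T}"
    then have l: "0 < l" and l\<delta>: "l < \<delta>" and t: "0 \<le> t" "t \<le> T" by auto
    define f where "f \<tau> = blinfun_apply (S (t - \<tau>)) (F (\<tau> / l) (u \<tau>) - Fh (u \<tau>))" for \<tau>
    have ucT': "continuous_on {0..t} u" by (rule continuous_on_subset[OF uc]) auto
    have yc: "continuous_on {0..t} (\<lambda>\<tau>. F (\<tau> / l) (u \<tau>) - Fh (u \<tau>))"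
    proof (intro continuous_intros)
      show "continuous_on {0..t} (\<lambda>\<tau>. F (\<tau> / l) (u \<tau>))"
        by (rule F_cont_comp) (use l ucT' in \<open>auto intro!: continuous_intros\<close>)
      show "continuous_on {0..t} (\<lambda>\<tau>. Fh (u \<tau>))"
        by (rule continuous_on_compose2[OF Fh_cont ucT']) auto
    qed
    have fi: "f integrable_on {0..t}" unfolding f_def
      by (rule integrable_continuous_real[OF S_apply_cont[OF yc]])
    have fb: "\<And>\<tau>. \<tau> \<in> {0..t} \<Longrightarrow> norm (f \<tau>) \<le> D'" unfolding f_def using fbound l t by auto
    show "norm (integral {0..t} f) \<le> \<epsilon>" unfolding f_def[symmetric]
    proof (cases "t \<le> tstar")
      case True
      have "norm (integral {0..t} f) \<le> D' * (t - 0)" by (rule int_bound_real[OF fi t(1) fb])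
      also have "\<dots> \<le> D' * tstar" using True D'p by (simp add: mult_left_mono)
      also have "\<dots> = \<epsilon>" using D'p by (simp add: tstar_def)
      finally show ?thesis .
    next
      case False
      define h where "h = t / real N"
      have hp: "h > 0" using False ts Npos by (simp add: h_def)
      have hT: "h \<le> T / real N" using t Npos by (simp add: h_def divide_right_mono)
      have h\<delta>: "h < \<delta>m" using hT TN1 by linarith
      have tN: "t = h + real m * h"
      proof -
        have "h + real m * h = real N * h" by (simp add: N_def algebra_simps)
        also have "\<dots> = t" using Npos by (simp add: h_def)
        finally show ?thesis by simp
      qed
      have I0: "norm (integral {0..h} f) \<le> D' * (h - 0)"
      proof (rule int_bound_real[OF integrable_on_subinterval[OF fi]])
        have "0 \<le> real m * h" using hp by simp
        then have ht: "h \<le> t" using tN by linarith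
        then show "{0..h} \<subseteq> {0..t}" by auto
        show "0 \<le> h" using hp by simp
        show "\<And>x. x \<in> {0..h} \<Longrightarrow> norm (f x) \<le> D'" using fb ht by auto
      qed
      have I0': "D' * h < \<epsilon> / 2"
      proof -
        have "D' * h \<le> D' * (T / real N)" using hT D'p by (intro mult_left_mono) auto
        then have "D' * h \<le> T / real N * D'" by (simp only: mult.commute)
        then show ?thesis using TN2 by linarith
      qed
      have hl: "h / l \<ge> T0"
      proof -
        have "tstar / real N < h" using False Npos by (simp add: h_def divide_strict_right_mono)
        moreover have "l * (real N * T0) < tstar" using l\<delta> Npos T0 by (simp add: \<delta>_def field_simps)
        ultimately have "l * T0 * real N < h * real N"
        proof -
          assume a1: "tstar / real N < h" and a2: "l * (real N * T0) < tstar"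
          have "tstar < h * real N" using a1 Npos by (simp add: pos_divide_less_eq)
          moreover have "l * T0 * real N = l * (real N * T0)" by (simp add: ac_simps)
          ultimately show ?thesis using a2 by linarith
        qed
        then have "l * T0 < h" using Npos by (simp add: mult_less_cancel_right)
        then show ?thesis using l by (simp add: field_simps)
      qed
      have SU: "dist (blinfun_apply (S \<sigma>) y) (blinfun_apply (S \<sigma>') y) \<le> e1"
        if "\<sigma> \<in> {0..T}" "\<sigma>' \<in> {0..T}" "y \<in> C" "\<bar>\<sigma> - \<sigma>'\<bar> \<le> h" for \<sigma> \<sigma>' y
      proof -
        have "dist (\<sigma>', y) (\<sigma>, y) < \<delta>1"
          using that h\<delta> by (simp add: dist_Pair_Pair dist_real_def \<delta>m_def abs_minus_commute)
        then have "dist (\<Phi> (\<sigma>', y)) (\<Phi> (\<sigma>, y)) < e1" using \<delta>1H that by (auto simp: D_def)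
        then show ?thesis by (simp add: \<Phi>_def dist_commute)
      qed
      have UU: "norm (u \<tau> - u \<tau>') \<le> e2" if "\<tau> \<in> {0..T}" "\<tau>' \<in> {0..T}" "\<bar>\<tau> - \<tau>'\<bar> \<le> h" for \<tau> \<tau>'
      proof -
        have "dist \<tau> \<tau>' < \<delta>2" using that h\<delta> by (simp add: dist_real_def \<delta>m_def)
        then have "dist (u \<tau>) (u \<tau>') < e2" using \<delta>2H that by blast
        then show ?thesis by (simp add: dist_norm)
      qed
      have pieceb: "norm (integral {h + real j * h .. h + real (Suc j) * h} f) \<le> h * e" if j: "j < m" for j
      proof -
        define a where "a = h + real j * h"
        have ap: "0 < a" using hp by (simp add: a_def add_pos_nonneg)
        have ah: "a + h \<le> t"
        proof -
          have "real j + 1 \<le> real m" using j by simp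
          then have "(real j + 1) * h \<le> real m * h" using hp by (simp add: mult_right_mono)
          then show ?thesis using tN by (simp add: a_def algebra_simps)
        qed
        have aT: "a \<in> {0..T}" using ap ah hp t by auto
        have av: "norm (avg (h / l) (a / l) (u a) - Fh (u a)) \<le> e3"
          using T0H[OF hl _ , of "a / l" "u a"] ap l aT by (auto simp: U_def dist_norm)
        have "norm (integral {a..a+h} f) \<le> h * (e1 + NT T * (2 * Lp * e2) + NT T * e3)"
          unfolding f_def
          by (rule piece_bound[OF l hp ap ah t(2) uc _ _ yC LF LFh Lp av])
             (use SU UU l in \<open>auto simp: NS_def\<close>)
        also have "\<dots> \<le> h * e" using esum hp by (simp add: NS_def mult_left_mono)
        finally show ?thesis by (simp add: a_def algebra_simps)
      qed
      have Ir: "norm (integral {h .. h + real m * h} f) \<le> real m * (h * e)"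
        by (rule pieces[OF _ _ pieceb]) (use fi tN hp in \<open>auto intro: integrable_on_subinterval\<close>)
      have fi': "f integrable_on {0..h + real m * h}" using fi tN by simp
      have comb0: "integral {0..h} f + integral {h .. h + real m * h} f = integral {0..h + real m * h} f"
        by (rule Henstock_Kurzweil_Integration.integral_combine[OF _ _ fi']) (use hp in auto)
      have comb: "integral {0..h} f + integral {h .. h + real m * h} f = integral {0..t} f"
        using comb0 tN by simp
      have "norm (integral {0..t} f) \<le> norm (integral {0..h} f) + norm (integral {h .. h + real m * h} f)"
        unfolding comb[symmetric] by (rule norm_triangle_ineq)
      also have "\<dots> \<le> D' * h + real m * (h * e)" using I0 Ir by simp
      also have "\<dots> \<le> \<epsilon>"
      proof -
        have "real m * (h * e) = (real m * h) * e" by simp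
        also have "\<dots> \<le> T * e" using tN t hp e by (intro mult_right_mono) auto
        also have "\<dots> \<le> \<epsilon> / 2" using T eps by (simp add: e_def field_simps)
        finally show ?thesis using I0' by linarith
      qed
      finally show ?thesis .
    qed
  qed
qed

end

context avg_setting begin

lemma conv_pos:
  assumes lam_pos: "\<And>n. lam n > 0" and lam_lim: "lam \<longlonglongrightarrow> 0" and ubar_lim: "ubar \<longlonglongrightarrow> u0"
    and us: "\<And>n. mild_solution (R (lam n)) (lam n) F (ubar n) (us n)"
    and u: "avg_mild_solution S Fh u0 u" and T: "0 < T"
  shows "uniform_limit {0..T} us u sequentially"
proof -
  have usc: "\<And>n. continuous_on {0..} (us n)" using us by (simp add: mild_solution_def)
  have ush: "\<And>n t. 0 \<le> t \<Longrightarrow> ((\<lambda>\<tau>. blinfun_apply (R (lam n) t \<tau>) (F (\<tau> / lam n) (us n \<tau>))) has_integral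
               (us n t - blinfun_apply (R (lam n) t 0) (ubar n))) {0..t}"
    using us by (simp add: mild_solution_def)
  have uc: "continuous_on {0..} u" using u by (simp add: avg_mild_solution_def)
  have uh: "\<And>t. 0 \<le> t \<Longrightarrow> ((\<lambda>\<tau>. blinfun_apply (S (t - \<tau>)) (Fh (u \<tau>))) has_integral
               (u t - blinfun_apply (S t) u0)) {0..t}"
    using u by (simp add: avg_mild_solution_def)
  define NS where "NS = NT T"
  have NS: "NS > 0" using NT_pos by (simp add: NS_def)
  have ucT: "continuous_on {0..T} u" by (rule continuous_on_subset[OF uc]) auto
  obtain K where K: "K > 0" "\<And>n. norm (ubar n) \<le> K"
    using convergent_imp_Bseq[of ubar] ubar_lim by (auto simp: convergent_def Bseq_def)
  have Fc: "continuous_on {0..t} (\<lambda>\<tau>. F (\<tau> / l) (w \<tau>))" if "0 < l" "continuous_on {0..} w" for l t w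
    by (rule F_cont_comp) (use that in \<open>auto intro!: continuous_intros intro: continuous_on_subset\<close>)
  have Rint: "(\<lambda>\<tau>. blinfun_apply (R (lam n) t \<tau>) (F (\<tau> / lam n) (w \<tau>))) integrable_on {0..t}"
    if "continuous_on {0..} w" for n t w
    by (rule integrable_continuous_real[OF R_apply_cont[OF lam_pos Fc[OF lam_pos that]]])
  have Sint: "(\<lambda>\<tau>. blinfun_apply (S (t - \<tau>)) (F (\<tau> / lam n) (u \<tau>))) integrable_on {0..t}" for n t
    by (rule integrable_continuous_real[OF S_apply_cont[OF Fc[OF lam_pos uc]]])
  have SFhint: "(\<lambda>\<tau>. blinfun_apply (S (t - \<tau>)) (Fh (u \<tau>))) integrable_on {0..t}" for t
  proof (rule integrable_continuous_real[OF S_apply_cont])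
    show "continuous_on {0..t} (\<lambda>\<tau>. Fh (u \<tau>))"
      by (rule continuous_on_compose2[OF Fh_cont continuous_on_subset[OF uc]]) auto
  qed
  define B1 where "B1 = 2 * (NS * K + NS * cF * T) * exp (2 * (NS * cF + 1) * T)"
  have usb: "norm (us n t) \<le> B1" if t: "t \<in> {0..T}" for n t
  proof -
    define \<phi> where "\<phi> s = norm (us n s)" for s
    have \<phi>c: "continuous_on {0..T} \<phi>" unfolding \<phi>_def
      by (intro continuous_intros continuous_on_subset[OF usc]) auto
    have NSc: "0 \<le> NS * cF" using NS cF(1) by simp
    have ineq: "\<phi> x \<le> (NS * K + NS * cF * T) + (NS * cF + 1) * integral {0..x} \<phi>" if x: "x \<in> {0..T}" for x
    proof -
      have sub: "{0..x} \<subseteq> {0..T}" using x by auto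
      have \<phi>i: "\<phi> integrable_on {0..x}"
        by (rule integrable_continuous_real[OF continuous_on_subset[OF \<phi>c sub]])
      have i2: "(\<lambda>s. NS * cF * (1 + \<phi> s)) integrable_on {0..x}"
        by (intro integrable_continuous_real continuous_intros continuous_on_subset[OF \<phi>c sub])
      have eqx: "us n x = blinfun_apply (R (lam n) x 0) (ubar n) + integral {0..x} (\<lambda>\<tau>. blinfun_apply (R (lam n) x \<tau>) (F (\<tau> / lam n) (us n \<tau>)))"
        using integral_unique[OF ush[of x n]] x by simp
      have "norm (integral {0..x} (\<lambda>\<tau>. blinfun_apply (R (lam n) x \<tau>) (F (\<tau> / lam n) (us n \<tau>)))) \<le> integral {0..x} (\<lambda>s. NS * cF * (1 + \<phi> s))"
      proof (rule integral_norm_bound_integral[OF Rint[OF usc] i2])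
        fix s assume s: "s \<in> {0..x}"
        have "norm (blinfun_apply (R (lam n) x s) (F (s / lam n) (us n s))) \<le> norm (R (lam n) x s) * norm (F (s / lam n) (us n s))"
          by (rule norm_blinfun)
        also have "\<dots> \<le> NS * (cF * (1 + \<phi> s))"
        proof (rule mult_mono)
          show "norm (R (lam n) x s) \<le> NS" using R_NT[OF lam_pos, of s x T] s x by (simp add: NS_def)
          show "norm (F (s / lam n) (us n s)) \<le> cF * (1 + \<phi> s)"
            using cF(2)[of "s / lam n" "us n s"] lam_pos[of n] s by (simp add: \<phi>_def)
        qed (use NS in auto)
        finally show "norm (blinfun_apply (R (lam n) x s) (F (s / lam n) (us n s))) \<le> NS * cF * (1 + \<phi> s)"
          by (simp add: ac_simps)
      qed
      also have "integral {0..x} (\<lambda>s. NS * cF * (1 + \<phi> s)) = NS * cF * x + NS * cF * integral {0..x} \<phi>"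
      proof -
        have "integral {0..x} (\<lambda>s. NS * cF * (1 + \<phi> s)) = NS * cF * integral {0..x} (\<lambda>s. 1 + \<phi> s)" by simp
        also have "integral {0..x} (\<lambda>s. 1 + \<phi> s) = x + integral {0..x} \<phi>"
          using integral_add[OF integrable_const_ivl \<phi>i, of 1] x by simp
        finally show ?thesis by (simp add: algebra_simps)
      qed
      finally have I: "norm (integral {0..x} (\<lambda>\<tau>. blinfun_apply (R (lam n) x \<tau>) (F (\<tau> / lam n) (us n \<tau>)))) \<le> NS * cF * x + NS * cF * integral {0..x} \<phi>" .
      have a: "norm (blinfun_apply (R (lam n) x 0) (ubar n)) \<le> NS * K"
      proof -
        have "norm (blinfun_apply (R (lam n) x 0) (ubar n)) \<le> norm (R (lam n) x 0) * norm (ubar n)" by (rule norm_blinfun)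
        also have "\<dots> \<le> NS * K"
          by (rule mult_mono) (use R_NT[OF lam_pos, of 0 x T] x K NS in \<open>auto simp: NS_def\<close>)
        finally show ?thesis .
      qed
      have "\<phi> x \<le> norm (blinfun_apply (R (lam n) x 0) (ubar n)) + norm (integral {0..x} (\<lambda>\<tau>. blinfun_apply (R (lam n) x \<tau>) (F (\<tau> / lam n) (us n \<tau>))))"
        unfolding \<phi>_def eqx by (rule norm_triangle_ineq)
      also have "\<dots> \<le> NS * K + (NS * cF * x + NS * cF * integral {0..x} \<phi>)" using a I by linarith
      also have "\<dots> \<le> (NS * K + NS * cF * T) + (NS * cF + 1) * integral {0..x} \<phi>"
      proof -
        have i0: "0 \<le> integral {0..x} \<phi>" by (rule integral_nonneg[OF \<phi>i]) (simp add: \<phi>_def)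
        have "NS * cF * x \<le> NS * cF * T" using x NSc by (simp add: mult_left_mono)
        then show ?thesis using i0 by (simp add: algebra_simps)
      qed
      finally show ?thesis .
    qed
    have Nc1: "0 < NS * cF + 1" using NSc by linarith
    have a0: "0 \<le> NS * K + NS * cF * T" using NS K NSc T by simp
    have "\<phi> t \<le> 2 * (NS * K + NS * cF * T) * exp (2 * (NS * cF + 1) * T)"
      by (rule gronwall_sup[OF \<phi>c _ a0 Nc1 ineq t]) (auto simp: \<phi>_def)
    then show ?thesis by (simp add: \<phi>_def B1_def)
  qed
  obtain Bu0 where Bu0: "\<forall>x\<in>u ` {0..T}. norm x \<le> Bu0"
    using compact_imp_bounded[OF compact_continuous_image[OF ucT compact_Icc]] bounded_iff by blast
  define B where "B = max B1 Bu0"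
  have usB: "us n t \<in> cball 0 B" if "t \<in> {0..T}" for n t
    using usb[OF that, of n] by (simp add: B_def mem_cball_0 max.coboundedI1)
  have uB: "u t \<in> cball 0 B" if "t \<in> {0..T}" for t
  proof -
    have "norm (u t) \<le> Bu0" using Bu0 that by auto
    then show ?thesis by (simp add: B_def mem_cball_0 max.coboundedI2)
  qed
  obtain L where L: "\<forall>t\<ge>0. \<forall>x\<in>cball 0 B. \<forall>y\<in>cball 0 B. dist (F t x) (F t y) \<le> L * dist x y"
    using A3_lip[of "cball 0 B"] by auto
  define Lp where "Lp = max L 0"
  have Lp: "0 \<le> Lp" by (simp add: Lp_def)
  define \<kappa> where "\<kappa> = NS * Lp + 1"
  have \<kappa>: "\<kappa> > 0" unfolding \<kappa>_def using mult_nonneg_nonneg[OF less_imp_le[OF NS] Lp] by linarith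
  show ?thesis
    unfolding uniform_limit_iff
  proof (intro allI impI)
    fix \<epsilon> :: real assume eps: "\<epsilon> > 0"
    define \<eta> where "\<eta> = \<epsilon> / (4 * exp (2 * \<kappa> * T))"
    have \<eta>: "\<eta> > 0" using eps by (simp add: \<eta>_def)
    obtain \<delta>a where \<delta>a: "\<delta>a > 0" and \<delta>aH: "\<forall>l v t s. 0 < l \<and> l < \<delta>a \<and> dist v u0 < \<delta>a \<and> 0 \<le> s \<and> s \<le> t \<and> t \<le> T \<longrightarrow>
                      dist (blinfun_apply (R l t s) v) (blinfun_apply (S (t - s)) u0) < \<eta> / 3"
      using A2_limit[of "\<eta> / 3" u0 T] \<eta> by auto
    define Wset where "Wset = closure {F s w | s w. 0 \<le> s \<and> w \<in> u ` {0..T}}"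
    have Wc: "compact Wset" unfolding Wset_def
      by (rule Fvals_compact[OF compact_continuous_image[OF ucT compact_Icc]])
    have FW: "F (\<tau> / l) (u \<tau>) \<in> Wset" if "\<tau> \<in> {0..T}" "0 < l" for \<tau> l
    proof -
      have "0 \<le> \<tau> / l" "u \<tau> \<in> u ` {0..T}" using that by auto
      then have "F (\<tau> / l) (u \<tau>) \<in> {F s w | s w. 0 \<le> s \<and> w \<in> u ` {0..T}}" by blast
      then show ?thesis unfolding Wset_def by (rule closure_subset[THEN subsetD])
    qed
    have e2: "\<eta> / (3 * (T + 1)) > 0" using \<eta> T by simp
    obtain \<delta>b where \<delta>b: "\<delta>b > 0" and \<delta>bH: "\<forall>l y s t. 0 < l \<and> l < \<delta>b \<and> y \<in> Wset \<and> 0 \<le> s \<and> s \<le> t \<and> t \<le> T \<longrightarrow>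
      dist (blinfun_apply (R l t s) y) (blinfun_apply (S (t - s)) y) < \<eta> / (3 * (T + 1))"
      using A2_compact[OF Wc e2, of T] by blast
    obtain \<delta>c where \<delta>c: "\<delta>c > 0" and \<delta>cH: "\<forall>l t. 0 < l \<and> l < \<delta>c \<and> t \<in> {0..T} \<longrightarrow>
     norm (integral {0..t} (\<lambda>\<tau>. blinfun_apply (S (t - \<tau>)) (F (\<tau> / l) (u \<tau>) - Fh (u \<tau>)))) \<le> \<eta> / 3"
      using avg_term[OF uc T, of "\<eta> / 3"] \<eta> by auto
    define \<delta> where "\<delta> = min \<delta>a (min \<delta>b \<delta>c)"
    have \<delta>: "\<delta> > 0" using \<delta>a \<delta>b \<delta>c by (simp add: \<delta>_def)
    have ev1: "\<forall>\<^sub>F n in sequentially. lam n < \<delta>"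
    proof -
      have "\<forall>\<^sub>F n in sequentially. dist (lam n) 0 < \<delta>" using lam_lim \<delta> unfolding tendsto_iff by blast
      then show ?thesis by (rule eventually_mono) (simp add: dist_real_def)
    qed
    have ev2: "\<forall>\<^sub>F n in sequentially. dist (ubar n) u0 < \<delta>a"
      using ubar_lim \<delta>a unfolding tendsto_iff by auto
    show "\<forall>\<^sub>F n in sequentially. \<forall>x\<in>{0..T}. dist (us n x) (u x) < \<epsilon>"
      using ev1 ev2
    proof eventually_elim
      case (elim n)
      have ln: "0 < lam n" "lam n < \<delta>a" "lam n < \<delta>b" "lam n < \<delta>c"
        using elim lam_pos[of n] by (auto simp: \<delta>_def)
      define \<phi> where "\<phi> s = norm (us n s - u s)" for s
      have \<phi>c: "continuous_on {0..T} \<phi>" unfolding \<phi>_def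
        by (intro continuous_intros continuous_on_subset[OF usc] ucT) auto
      have ineq: "\<phi> x \<le> \<eta> + \<kappa> * integral {0..x} \<phi>" if x: "x \<in> {0..T}" for x
      proof -
        have sub: "{0..x} \<subseteq> {0..T}" using x by auto
        have \<phi>i: "\<phi> integrable_on {0..x}"
          by (rule integrable_continuous_real[OF continuous_on_subset[OF \<phi>c sub]])
        define A where "A = blinfun_apply (R (lam n) x 0) (ubar n) - blinfun_apply (S x) u0"
        define f1 where "f1 \<tau> = blinfun_apply (R (lam n) x \<tau>) (F (\<tau> / lam n) (us n \<tau>))" for \<tau>
        define f2 where "f2 \<tau> = blinfun_apply (R (lam n) x \<tau>) (F (\<tau> / lam n) (u \<tau>))" for \<tau>
        define f3 where "f3 \<tau> = blinfun_apply (S (x - \<tau>)) (F (\<tau> / lam n) (u \<tau>))" for \<tau>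
        define f4 where "f4 \<tau> = blinfun_apply (S (x - \<tau>)) (Fh (u \<tau>))" for \<tau>
        have i1: "f1 integrable_on {0..x}" unfolding f1_def by (rule Rint[OF usc])
        have i2: "f2 integrable_on {0..x}" unfolding f2_def by (rule Rint[OF uc])
        have i3: "f3 integrable_on {0..x}" unfolding f3_def by (rule Sint)
        have i4: "f4 integrable_on {0..x}" unfolding f4_def by (rule SFhint)
        have e1: "us n x = blinfun_apply (R (lam n) x 0) (ubar n) + integral {0..x} f1"
          using integral_unique[OF ush[of x n]] x by (simp add: f1_def[abs_def])
        have e2: "u x = blinfun_apply (S x) u0 + integral {0..x} f4"
          using integral_unique[OF uh[of x]] x by (simp add: f4_def[abs_def])
        have dec: "us n x - u x = A + integral {0..x} (\<lambda>\<tau>. f1 \<tau> - f2 \<tau>) + integral {0..x} (\<lambda>\<tau>. f2 \<tau> - f3 \<tau>)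
                    + integral {0..x} (\<lambda>\<tau>. f3 \<tau> - f4 \<tau>)"
          unfolding integral_diff[OF i1 i2] integral_diff[OF i2 i3] integral_diff[OF i3 i4] A_def
          by (subst e1, subst e2) (simp add: algebra_simps)
        have tA: "norm A < \<eta> / 3"
          using \<delta>aH[rule_format, of "lam n" "ubar n" 0 x] ln elim x by (auto simp: A_def dist_norm)
        have t1: "norm (integral {0..x} (\<lambda>\<tau>. f1 \<tau> - f2 \<tau>)) \<le> integral {0..x} (\<lambda>\<tau>. (NS * Lp) * \<phi> \<tau>)"
        proof (rule integral_norm_bound_integral[OF integrable_diff[OF i1 i2]])
          show "(\<lambda>\<tau>. NS * Lp * \<phi> \<tau>) integrable_on {0..x}"
            using integrable_on_cmult_left[OF \<phi>i, of "NS * Lp"] by simp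
          fix \<tau> assume \<tau>: "\<tau> \<in> {0..x}"
          have "norm (f1 \<tau> - f2 \<tau>) = norm (blinfun_apply (R (lam n) x \<tau>) (F (\<tau> / lam n) (us n \<tau>) - F (\<tau> / lam n) (u \<tau>)))"
            by (simp add: f1_def f2_def blinfun.diff_right)
          also have "\<dots> \<le> norm (R (lam n) x \<tau>) * norm (F (\<tau> / lam n) (us n \<tau>) - F (\<tau> / lam n) (u \<tau>))"
            by (rule norm_blinfun)
          also have "\<dots> \<le> NS * (Lp * \<phi> \<tau>)"
          proof (rule mult_mono)
            show "norm (R (lam n) x \<tau>) \<le> NS" using R_NT[OF ln(1), of \<tau> x T] \<tau> x by (simp add: NS_def)
            have \<tau>T: "\<tau> \<in> {0..T}" using \<tau> x by auto
            have "dist (F (\<tau> / lam n) (us n \<tau>)) (F (\<tau> / lam n) (u \<tau>)) \<le> L * dist (us n \<tau>) (u \<tau>)"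
              using L usB[OF \<tau>T, of n] uB[OF \<tau>T] \<tau> ln(1) by auto
            also have "\<dots> \<le> Lp * dist (us n \<tau>) (u \<tau>)" by (simp add: Lp_def mult_right_mono)
            finally show "norm (F (\<tau> / lam n) (us n \<tau>) - F (\<tau> / lam n) (u \<tau>)) \<le> Lp * \<phi> \<tau>"
              by (simp add: dist_norm \<phi>_def)
          qed (use NS in auto)
          finally show "norm (f1 \<tau> - f2 \<tau>) \<le> NS * Lp * \<phi> \<tau>" by (simp add: ac_simps)
        qed
        also have "\<dots> = (NS * Lp) * integral {0..x} \<phi>" by simp
        finally have t1': "norm (integral {0..x} (\<lambda>\<tau>. f1 \<tau> - f2 \<tau>)) \<le> (NS * Lp) * integral {0..x} \<phi>" .
        have t2: "norm (integral {0..x} (\<lambda>\<tau>. f2 \<tau> - f3 \<tau>)) \<le> \<eta> / (3 * (T + 1)) * (x - 0)"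
        proof (rule int_bound_real[OF integrable_diff[OF i2 i3]])
          show "0 \<le> x" using x by simp
          fix \<tau> assume \<tau>: "\<tau> \<in> {0..x}"
          have \<tau>T: "\<tau> \<in> {0..T}" using \<tau> x by auto
          show "norm (f2 \<tau> - f3 \<tau>) \<le> \<eta> / (3 * (T + 1))"
            using \<delta>bH[rule_format, of "lam n" "F (\<tau> / lam n) (u \<tau>)" \<tau> x] FW[OF \<tau>T ln(1)] ln \<tau> x
            by (auto simp: f2_def f3_def dist_norm)
        qed
        have t2': "\<eta> / (3 * (T + 1)) * (x - 0) \<le> \<eta> / 3"
        proof -
          have "\<eta> / (3 * (T + 1)) * x \<le> \<eta> / (3 * (T + 1)) * (T + 1)"
            using x \<eta> T by (intro mult_left_mono) auto
          also have "\<dots> = \<eta> / 3" using T by (simp add: field_simps)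
          finally show ?thesis by simp
        qed
        have t3: "norm (integral {0..x} (\<lambda>\<tau>. f3 \<tau> - f4 \<tau>)) \<le> \<eta> / 3"
        proof -
          have "integral {0..x} (\<lambda>\<tau>. f3 \<tau> - f4 \<tau>) = integral {0..x} (\<lambda>\<tau>. blinfun_apply (S (x - \<tau>)) (F (\<tau> / lam n) (u \<tau>) - Fh (u \<tau>)))"
            by (simp add: f3_def f4_def blinfun.diff_right)
          then show ?thesis using \<delta>cH[rule_format, of "lam n" x] ln x by simp
        qed
        have "\<phi> x \<le> norm A + norm (integral {0..x} (\<lambda>\<tau>. f1 \<tau> - f2 \<tau>)) + norm (integral {0..x} (\<lambda>\<tau>. f2 \<tau> - f3 \<tau>))
                    + norm (integral {0..x} (\<lambda>\<tau>. f3 \<tau> - f4 \<tau>))"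
          unfolding \<phi>_def dec by (intro norm_triangle_le add_mono order_refl norm_triangle_ineq)
        also have "\<dots> \<le> \<eta> / 3 + (NS * Lp) * integral {0..x} \<phi> + \<eta> / 3 + \<eta> / 3"
          using tA t1' t2 t2' t3 by linarith
        also have "\<dots> \<le> \<eta> + \<kappa> * integral {0..x} \<phi>"
        proof -
          have "0 \<le> integral {0..x} \<phi>" by (rule integral_nonneg[OF \<phi>i]) (simp add: \<phi>_def)
          then show ?thesis by (simp add: \<kappa>_def algebra_simps)
        qed
        finally show ?thesis .
      qed
      show ?case
      proof
        fix t assume t: "t \<in> {0..T}"
        have "\<phi> t \<le> 2 * \<eta> * exp (2 * \<kappa> * T)"
          by (rule gronwall_sup[OF \<phi>c _ _ \<kappa> ineq t]) (use \<eta> in \<open>auto simp: \<phi>_def\<close>)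
        also have "\<dots> = \<epsilon> / 2" by (simp add: \<eta>_def)
        also have "\<dots> < \<epsilon>" using eps by simp
        finally show "dist (us n t) (u t) < \<epsilon>" by (simp add: \<phi>_def dist_norm)
      qed
    qed
  qed
qed

end

context avg_setting begin

lemma exist_R: assumes l: "0 < l" shows "\<exists>v. mild_solution (R l) l F ub v"
proof -
  have "\<exists>w. continuous_on {0..} w \<and>
     (\<forall>t\<ge>0. ((\<lambda>s. blinfun_apply (R l t s) (F (s / l) (w s))) has_integral (w t - blinfun_apply (R l t 0) ub)) {0..t})"
  proof (rule exist_global[OF R_kernel[OF l] _ F_cont_scaled[OF l] _ _ less_imp_le[OF cF(1)]])
    show "\<exists>N\<ge>0. \<forall>s t. 0 \<le> s \<longrightarrow> s \<le> t \<longrightarrow> t \<le> T \<longrightarrow> norm (R l t s) \<le> N" for T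
      using R_NT[OF l] NT_pos[of T] by (intro exI[of _ "NT T"]) auto
    show "\<exists>L. \<forall>t\<ge>0. \<forall>x\<in>B. \<forall>y\<in>B. dist (F (t / l) x) (F (t / l) y) \<le> L * dist x y" if Bb: "bounded B" for B
    proof -
      obtain L where "\<forall>t\<ge>0. \<forall>x\<in>B. \<forall>y\<in>B. dist (F t x) (F t y) \<le> L * dist x y" using A3_lip[OF Bb] by blast
      then show ?thesis using l by (intro exI[of _ L]) auto
    qed
    show "norm (F (t / l) v) \<le> cF * (1 + norm v)" if "0 \<le> t" for t v using cF(2) that l by simp
  qed
  then show ?thesis by (auto simp: mild_solution_def)
qed

lemma exist_S: "\<exists>u. avg_mild_solution S Fh u0 u"
proof -
  have Gc: "continuous_on ({0..} \<times> UNIV) (\<lambda>(t, v). Fh v)"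
  proof -
    have "continuous_on ({0..} \<times> UNIV) (\<lambda>p. Fh (snd p))"
      by (rule continuous_on_compose2[OF Fh_cont]) (auto intro!: continuous_intros)
    then show ?thesis by (simp add: case_prod_beta)
  qed
  have "\<exists>w. continuous_on {0..} w \<and>
     (\<forall>t\<ge>0. ((\<lambda>s. blinfun_apply (S (t - s)) (Fh (w s))) has_integral (w t - blinfun_apply (S (t - 0)) u0)) {0..t})"
  proof (rule exist_global[OF S_kernel _ Gc _ _ less_imp_le[OF cF(1)]])
    show "\<exists>N\<ge>0. \<forall>s t. 0 \<le> s \<longrightarrow> s \<le> t \<longrightarrow> t \<le> T \<longrightarrow> norm (S (t - s)) \<le> N" for T
      using S_NT NT_pos[of T] by (intro exI[of _ "NT T"]) auto
    show "\<exists>L. \<forall>t\<ge>0. \<forall>x\<in>B. \<forall>y\<in>B. dist (Fh x) (Fh y) \<le> L * dist x y" if "bounded B" for B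
      using Fh_lipB[OF that] by blast
    show "norm (Fh v) \<le> cF * (1 + norm v)" for v by (rule Fh_growth)
  qed
  then show ?thesis by (auto simp: avg_mild_solution_def)
qed

lemma conv:
  assumes lam_pos: "\<And>n. lam n > 0" and lam_lim: "lam \<longlonglongrightarrow> 0" and ubar_lim: "ubar \<longlonglongrightarrow> u0"
    and us: "\<And>n. mild_solution (R (lam n)) (lam n) F (ubar n) (us n)"
    and u: "avg_mild_solution S Fh u0 u" and T: "0 \<le> T"
  shows "uniform_limit {0..T} us u sequentially"
proof -
  have "uniform_limit {0..T+1} us u sequentially"
    by (rule conv_pos[OF lam_pos lam_lim ubar_lim us u]) (use T in simp)
  then show ?thesis by (rule uniform_limit_on_subset) auto
qed

end

theorem theorem1p1:
  fixes R :: "real \<Rightarrow> real \<Rightarrow> real \<Rightarrow> ('e::banach \<Rightarrow>\<^sub>L 'e)"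
    and S :: "real \<Rightarrow> ('e \<Rightarrow>\<^sub>L 'e)"
    and F :: "real \<Rightarrow> 'e \<Rightarrow> 'e"
    and Fh :: "'e \<Rightarrow> 'e"
    and M \<omega> :: real
    and lam :: "nat \<Rightarrow> real" and ubar :: "nat \<Rightarrow> 'e" and u0 :: 'e
  assumes sep: "separable_space TYPE('e)"
    and evol: "\<And>l. l > 0 \<Longrightarrow> evolution_system (R l)"
    and A1: "M \<ge> 1" "\<And>l t s. l > 0 \<Longrightarrow> 0 \<le> s \<Longrightarrow> s \<le> t \<Longrightarrow>
               norm (R l t s) \<le> M * exp (\<omega> * (t - s))"
    and A2_semigroup: "C0_semigroup S"
    and A2_limit: "\<And>u T \<epsilon>. \<epsilon> > 0 \<Longrightarrow> \<exists>\<delta>>0. \<forall>l v t s. 0 < l \<and> l < \<delta> \<and> dist v u < \<delta> \<and>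
                      0 \<le> s \<and> s \<le> t \<and> t \<le> T \<longrightarrow>
                      dist (blinfun_apply (R l t s) v) (blinfun_apply (S (t - s)) u) < \<epsilon>"
    and A3_cont: "continuous_on ({0..} \<times> UNIV) (\<lambda>(t, v). F t v)"
    and A3_lip: "\<And>B. bounded B \<Longrightarrow> \<exists>L. \<forall>t\<ge>0. \<forall>x\<in>B. \<forall>y\<in>B. dist (F t x) (F t y) \<le> L * dist x y"
    and A3_growth: "\<exists>c>0. \<forall>t\<ge>0. \<forall>v. norm (F t v) \<le> c * (1 + norm v)"
    and A4_compact: "\<And>u. compact (closure {F t u | t. t \<ge> 0})"
    and A4_loclip: "\<And>u. \<exists>\<delta>>0. \<exists>L. \<forall>x\<in>ball u \<delta>. \<forall>y\<in>ball u \<delta>. dist (Fh x) (Fh y) \<le> L * dist x y"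
    and A4_avg: "\<And>u \<epsilon>. \<epsilon> > 0 \<Longrightarrow> \<exists>T0 \<delta>. \<delta> > 0 \<and> (\<forall>T v h. T \<ge> T0 \<and> T > 0 \<and> dist v u < \<delta> \<and> h > 0 \<longrightarrow>
                      dist ((1 / T) *\<^sub>R integral {0..T} (\<lambda>\<tau>. F (\<tau> + h) v)) (Fh u) < \<epsilon>)"
    and lam_pos: "\<And>n. lam n > 0"
    and lam_lim: "lam \<longlonglongrightarrow> 0"
    and ubar_lim: "ubar \<longlonglongrightarrow> u0"
  shows "(\<forall>n. \<exists>v. mild_solution (R (lam n)) (lam n) F (ubar n) v) \<and>
         (\<exists>u. avg_mild_solution S Fh u0 u) \<and>
         (\<forall>us u. (\<forall>n. mild_solution (R (lam n)) (lam n) F (ubar n) (us n)) \<longrightarrow>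
                 avg_mild_solution S Fh u0 u \<longrightarrow>
                 (\<forall>T\<ge>0. uniform_limit {0..T} us u sequentially))"
proof -
  interpret A: avg_setting R S F Fh M \<omega>
    by (rule avg_setting.intro) (fact evol A1 A2_semigroup A2_limit A3_cont A3_lip A3_growth A4_compact A4_avg)+
  show ?thesis
    using A.exist_R[OF lam_pos] A.exist_S A.conv[OF lam_pos lam_lim ubar_lim] by blast
qed

end
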